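(* Let ${\mathcal F}$ be an $N_0$-equivariant homological coefficient system of abelian groups on $X_+$ with injective transition maps (i.e. $r^\tau_x:{\mathcal F}(\tau)\to{\mathcal F}(x)$ is injective for all $x\in\tau\in X_+^1$). Suppose that for each $x\in X_+^0$ the map $$H^1\Big(N_0\cap K_x,\bigoplus_{\tau\in\Theta(x)}{\mathcal F}(\tau)\Big)\to H^1(N_0\cap K_x,{\mathcal F}(x))$$ induced by the natural map $\bigoplus_{\tau\in\Theta(x)}{\mathcal F}(\tau)\to{\mathcal F}(x)$ (sum of the $r^\tau_x$) is injective. Then the natural map $C_0(X_+,{\mathcal F})^{N_0}\to H_0(X_+,{\mathcal F})^{N_0}$ is surjective.
   Context: $G={\rm SL}_2({\mathbb Q}_p)$, $X$ its Bruhat–Tits tree, $K_x$ the stabilizer of a vertex $x$. $NT$ is a Borel subgroup of $G$ with unipotent radical $N$ and split maximal torus $T$; $\sigma=\{x_+,x_-\}$ is an edge in the apartment of $T$, labelled so that $N_0:=K_{x_+}\cap N$ fixes $x_-$ (so $N_0\cong{\mathbb Z}_p$). $X_+$ is the maximal connected full subcomplex of $X$ containing $x_+$ but not $x_-$ (a half tree), with vertex set $X_+^0$ and edge set $X_+^1$; $N_0$ acts on $X_+$. For $x\in X_+^0$, $\Theta(x)$ is the set of edges $\tau\in X_+^1$ with $x\in\tau$ which are not fixed by $N_0\cap K_x$ (equivalently, all edges of $X_+$ at $x$ except the one whose other vertex lies on the geodesic from $x_-$ to $x$). An $N_0$-equivariant homological coefficient system on $X_+$ is defined like a $G$-equivariant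 one on $X$ (groups ${\mathcal F}(\tau)$ for simplices of $X_+$, maps $r^\tau_x$, and compatible action maps $g_\tau$ for $g\in N_0$). $C_0(X_+,{\mathcal F})=\bigoplus_{x\in X_+^0}{\mathcal F}(x)$, $C_1(X_+,{\mathcal F})=\bigoplus_{\tau\in X_+^1}{\mathcal F}(\tau)$, and $H_0(X_+,{\mathcal F})$ is the cokernel of the map $C_1\to C_0$ sending $y\in{\mathcal F}(\tau)$ to $\sum_{x\in\tau}r^\tau_x(y)$. Group cohomology is continuous cohomology with discrete coefficients. *)

theory Defs
  imports Main "HOL-Library.Function_Algebras" "HOL-Computational_Algebra.Primes"
begin

text \<open>An element of Z_p is a compatible sequence (a n) with 0 <= a n < p^n and
  a n = a (n+1) mod p^n.  The element g lies in p^n Z_p iff g n = 0.\<close>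

definition zp :: "int \<Rightarrow> (nat \<Rightarrow> int) set" where
  "zp p = {a. \<forall>n. 0 \<le> a n \<and> a n < p ^ n \<and> a n = a (Suc n) mod p ^ n}"

definition zadd :: "int \<Rightarrow> (nat \<Rightarrow> int) \<Rightarrow> (nat \<Rightarrow> int) \<Rightarrow> (nat \<Rightarrow> int)" where
  "zadd p a b = (\<lambda>n. (a n + b n) mod p ^ n)"

definition zneg :: "int \<Rightarrow> (nat \<Rightarrow> int) \<Rightarrow> (nat \<Rightarrow> int)" where
  "zneg p a = (\<lambda>n. (- a n) mod p ^ n)"

definition zzero :: "nat \<Rightarrow> int" where
  "zzero = (\<lambda>n. 0)"

text \<open>Vertices of X_+ at distance n from x_+ are the lattice classes
  [Z_p(a e1 + e2) + p^n (Z_p e1 + Z_p e2)], a in Z/p^n; we encode them as (n, a)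
  with 0 <= a < p^n.  The root (0,0) is x_+.\<close>

type_synonym vertex = "nat \<times> int"
type_synonym edge = "vertex set"

definition verts :: "int \<Rightarrow> vertex set" where
  "verts p = {(n, a). 0 \<le> a \<and> a < p ^ n}"

definition edges :: "int \<Rightarrow> edge set" where
  "edges p = {{(n, a), (Suc n, b)} | n a b.
       (n, a) \<in> verts p \<and> (Suc n, b) \<in> verts p \<and> b mod p ^ n = a}"

definition vact :: "int \<Rightarrow> (nat \<Rightarrow> int) \<Rightarrow> vertex \<Rightarrow> vertex" where
  "vact p g x = (fst x, (snd x + g (fst x)) mod p ^ fst x)"

definition eact :: "int \<Rightarrow> (nat \<Rightarrow> int) \<Rightarrow> edge \<Rightarrow> edge" where
  "eact p g \<tau> = vact p g ` \<tau>"

definition stab :: "int \<Rightarrow> vertex \<Rightarrow> (nat \<Rightarrow> int) set" where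
  "stab p x = {g \<in> zp p. vact p g x = x}"

definition Theta :: "int \<Rightarrow> vertex \<Rightarrow> edge set" where
  "Theta p x = {\<tau> \<in> edges p. x \<in> \<tau> \<and> (\<exists>g \<in> stab p x. eact p g \<tau> \<noteq> \<tau>)}"

text \<open>All groups F(sigma) are realised as subgroups of one ambient abelian group
  of type 'a (no loss of generality).  Fv/Fe give F on vertices/edges, r is the
  family of transition maps r^tau_x, Av/Ae are the action maps g_sigma.\<close>

definition subgrp :: "'a::ab_group_add set \<Rightarrow> bool" where
  "subgrp A \<longleftrightarrow> 0 \<in> A \<and> (\<forall>a\<in>A. \<forall>b\<in>A. a + b \<in> A \<and> - a \<in> A)"

definition additive_on :: "'a::ab_group_add set \<Rightarrow> ('a \<Rightarrow> 'b::ab_group_add) \<Rightarrow> 'b set \<Rightarrow> bool" where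
  "additive_on A f B \<longleftrightarrow> (\<forall>a\<in>A. f a \<in> B) \<and> (\<forall>a\<in>A. \<forall>b\<in>A. f (a + b) = f a + f b)"

definition coeff_sys ::
  "int \<Rightarrow> (vertex \<Rightarrow> 'a::ab_group_add set) \<Rightarrow> (edge \<Rightarrow> 'a set)
   \<Rightarrow> (edge \<Rightarrow> vertex \<Rightarrow> 'a \<Rightarrow> 'a)
   \<Rightarrow> ((nat \<Rightarrow> int) \<Rightarrow> vertex \<Rightarrow> 'a \<Rightarrow> 'a) \<Rightarrow> ((nat \<Rightarrow> int) \<Rightarrow> edge \<Rightarrow> 'a \<Rightarrow> 'a) \<Rightarrow> bool"
where
  "coeff_sys p Fv Fe r Av Ae \<longleftrightarrow>
     (\<forall>x \<in> verts p. subgrp (Fv x)) \<and>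
     (\<forall>\<tau> \<in> edges p. subgrp (Fe \<tau>)) \<and>
     (\<forall>\<tau> \<in> edges p. \<forall>x \<in> \<tau>. additive_on (Fe \<tau>) (r \<tau> x) (Fv x)) \<and>
     (\<forall>g \<in> zp p. \<forall>x \<in> verts p. additive_on (Fv x) (Av g x) (Fv (vact p g x))) \<and>
     (\<forall>g \<in> zp p. \<forall>\<tau> \<in> edges p. additive_on (Fe \<tau>) (Ae g \<tau>) (Fe (eact p g \<tau>))) \<and>
     (\<forall>x \<in> verts p. \<forall>m \<in> Fv x. Av zzero x m = m) \<and>
     (\<forall>\<tau> \<in> edges p. \<forall>m \<in> Fe \<tau>. Ae zzero \<tau> m = m) \<and>
     (\<forall>g \<in> zp p. \<forall>h \<in> zp p. \<forall>x \<in> verts p. \<forall>m \<in> Fv x.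
        Av (zadd p g h) x m = Av g (vact p h x) (Av h x m)) \<and>
     (\<forall>g \<in> zp p. \<forall>h \<in> zp p. \<forall>\<tau> \<in> edges p. \<forall>m \<in> Fe \<tau>.
        Ae (zadd p g h) \<tau> m = Ae g (eact p h \<tau>) (Ae h \<tau> m)) \<and>
     (\<forall>g \<in> zp p. \<forall>\<tau> \<in> edges p. \<forall>x \<in> \<tau>. \<forall>m \<in> Fe \<tau>.
        r (eact p g \<tau>) (vact p g x) (Ae g \<tau> m) = Av g x (r \<tau> x m))"

text \<open>Discreteness of the coefficients: every element of every F(sigma) is fixed
  by an open subgroup p^k Z_p of N_0 (i.e. the action is continuous for the
  discrete topology).\<close>
definition smooth_sys :: "int \<Rightarrow> (vertex \<Rightarrow> 'a::ab_group_add set) \<Rightarrow> (edge \<Rightarrow> 'a set)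
   \<Rightarrow> ((nat \<Rightarrow> int) \<Rightarrow> vertex \<Rightarrow> 'a \<Rightarrow> 'a) \<Rightarrow> ((nat \<Rightarrow> int) \<Rightarrow> edge \<Rightarrow> 'a \<Rightarrow> 'a) \<Rightarrow> bool"
where
  "smooth_sys p Fv Fe Av Ae \<longleftrightarrow>
     (\<forall>x \<in> verts p. \<forall>m \<in> Fv x. \<exists>k. \<forall>g \<in> zp p. g k = 0 \<longrightarrow> Av g x m = m) \<and>
     (\<forall>\<tau> \<in> edges p. \<forall>m \<in> Fe \<tau>. \<exists>k. \<forall>g \<in> zp p. g k = 0 \<longrightarrow> Ae g \<tau> m = m)"

text \<open>Continuous 1-cocycles H -> M (M discrete): crossed homomorphisms that are
  locally constant, i.e. factor through H mod p^k for some k.\<close>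
definition Z1 :: "int \<Rightarrow> (nat \<Rightarrow> int) set \<Rightarrow> 'm::ab_group_add set
    \<Rightarrow> ((nat \<Rightarrow> int) \<Rightarrow> 'm \<Rightarrow> 'm) \<Rightarrow> ((nat \<Rightarrow> int) \<Rightarrow> 'm) set" where
  "Z1 p H M act = {c. (\<forall>g \<in> H. c g \<in> M) \<and>
        (\<forall>g \<in> H. \<forall>h \<in> H. c (zadd p g h) = c g + act g (c h)) \<and>
        (\<exists>k. \<forall>g \<in> H. \<forall>h \<in> H. g k = h k \<longrightarrow> c g = c h)}"

definition cohomologous :: "(nat \<Rightarrow> int) set \<Rightarrow> 'm::ab_group_add set
    \<Rightarrow> ((nat \<Rightarrow> int) \<Rightarrow> 'm \<Rightarrow> 'm) \<Rightarrow> ((nat \<Rightarrow> int) \<Rightarrow> 'm) \<Rightarrow> ((nat \<Rightarrow> int) \<Rightarrow> 'm) \<Rightarrow> bool" where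
  "cohomologous H M act c c' \<longleftrightarrow> (\<exists>m \<in> M. \<forall>g \<in> H. c g - c' g = act g m - m)"

definition H1 :: "int \<Rightarrow> (nat \<Rightarrow> int) set \<Rightarrow> 'm::ab_group_add set
    \<Rightarrow> ((nat \<Rightarrow> int) \<Rightarrow> 'm \<Rightarrow> 'm) \<Rightarrow> ((nat \<Rightarrow> int) \<Rightarrow> 'm) set set" where
  "H1 p H M act = Z1 p H M act //
     {(c, c'). c \<in> Z1 p H M act \<and> c' \<in> Z1 p H M act \<and> cohomologous H M act c c'}"

definition H1_map :: "int \<Rightarrow> (nat \<Rightarrow> int) set \<Rightarrow> 'n::ab_group_add set
    \<Rightarrow> ((nat \<Rightarrow> int) \<Rightarrow> 'n \<Rightarrow> 'n) \<Rightarrow> ('m::ab_group_add \<Rightarrow> 'n)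
    \<Rightarrow> ((nat \<Rightarrow> int) \<Rightarrow> 'm) set \<Rightarrow> ((nat \<Rightarrow> int) \<Rightarrow> 'n) set" where
  "H1_map p H M' act' f C =
     {c'. c' \<in> Z1 p H M' act' \<and> (\<exists>c \<in> C. cohomologous H M' act' (f \<circ> c) c')}"

definition dsum_Theta :: "int \<Rightarrow> (edge \<Rightarrow> 'a::ab_group_add set) \<Rightarrow> vertex \<Rightarrow> (edge \<Rightarrow> 'a) set" where
  "dsum_Theta p Fe x = {y. (\<forall>\<tau> \<in> Theta p x. y \<tau> \<in> Fe \<tau>) \<and> (\<forall>\<tau>. \<tau> \<notin> Theta p x \<longrightarrow> y \<tau> = 0)}"

definition dsum_act :: "int \<Rightarrow> ((nat \<Rightarrow> int) \<Rightarrow> edge \<Rightarrow> 'a::ab_group_add \<Rightarrow> 'a) \<Rightarrow> vertex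
    \<Rightarrow> (nat \<Rightarrow> int) \<Rightarrow> (edge \<Rightarrow> 'a) \<Rightarrow> (edge \<Rightarrow> 'a)" where
  "dsum_act p Ae x g y = (\<lambda>\<tau>. if \<tau> \<in> Theta p x
       then Ae g (eact p (zneg p g) \<tau>) (y (eact p (zneg p g) \<tau>)) else 0)"

definition sum_map :: "int \<Rightarrow> (edge \<Rightarrow> vertex \<Rightarrow> 'a::ab_group_add \<Rightarrow> 'a) \<Rightarrow> vertex
    \<Rightarrow> (edge \<Rightarrow> 'a) \<Rightarrow> 'a" where
  "sum_map p r x y = (\<Sum>\<tau> \<in> Theta p x. r \<tau> x (y \<tau>))"

definition C0 :: "int \<Rightarrow> (vertex \<Rightarrow> 'a::ab_group_add set) \<Rightarrow> (vertex \<Rightarrow> 'a) set" where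
  "C0 p Fv = {c. finite {x. c x \<noteq> 0} \<and> (\<forall>x \<in> verts p. c x \<in> Fv x) \<and> (\<forall>x. x \<notin> verts p \<longrightarrow> c x = 0)}"

definition C1 :: "int \<Rightarrow> (edge \<Rightarrow> 'a::ab_group_add set) \<Rightarrow> (edge \<Rightarrow> 'a) set" where
  "C1 p Fe = {y. finite {\<tau>. y \<tau> \<noteq> 0} \<and> (\<forall>\<tau> \<in> edges p. y \<tau> \<in> Fe \<tau>) \<and> (\<forall>\<tau>. \<tau> \<notin> edges p \<longrightarrow> y \<tau> = 0)}"

definition bdry :: "int \<Rightarrow> (edge \<Rightarrow> vertex \<Rightarrow> 'a::ab_group_add \<Rightarrow> 'a) \<Rightarrow> (edge \<Rightarrow> 'a) \<Rightarrow> (vertex \<Rightarrow> 'a)" where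
  "bdry p r y = (\<lambda>x. \<Sum>\<tau> \<in> {\<tau> \<in> edges p. x \<in> \<tau>}. r \<tau> x (y \<tau>))"

definition chain_act :: "int \<Rightarrow> ((nat \<Rightarrow> int) \<Rightarrow> vertex \<Rightarrow> 'a::ab_group_add \<Rightarrow> 'a)
    \<Rightarrow> (nat \<Rightarrow> int) \<Rightarrow> (vertex \<Rightarrow> 'a) \<Rightarrow> (vertex \<Rightarrow> 'a)" where
  "chain_act p Av g c = (\<lambda>x. if x \<in> verts p
       then Av g (vact p (zneg p g) x) (c (vact p (zneg p g) x)) else 0)"

definition H0_class :: "int \<Rightarrow> (vertex \<Rightarrow> 'a::ab_group_add set) \<Rightarrow> (edge \<Rightarrow> 'a set)
    \<Rightarrow> (edge \<Rightarrow> vertex \<Rightarrow> 'a \<Rightarrow> 'a) \<Rightarrow> (vertex \<Rightarrow> 'a) \<Rightarrow> (vertex \<Rightarrow> 'a) set" where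
  "H0_class p Fv Fe r c = {c + b | b. b \<in> bdry p r ` C1 p Fe}"

definition H0 :: "int \<Rightarrow> (vertex \<Rightarrow> 'a::ab_group_add set) \<Rightarrow> (edge \<Rightarrow> 'a set)
    \<Rightarrow> (edge \<Rightarrow> vertex \<Rightarrow> 'a \<Rightarrow> 'a) \<Rightarrow> (vertex \<Rightarrow> 'a) set set" where
  "H0 p Fv Fe r = H0_class p Fv Fe r ` C0 p Fv"

definition H0_inv :: "int \<Rightarrow> (vertex \<Rightarrow> 'a::ab_group_add set) \<Rightarrow> (edge \<Rightarrow> 'a set)
    \<Rightarrow> (edge \<Rightarrow> vertex \<Rightarrow> 'a \<Rightarrow> 'a) \<Rightarrow> ((nat \<Rightarrow> int) \<Rightarrow> vertex \<Rightarrow> 'a \<Rightarrow> 'a) \<Rightarrow> (vertex \<Rightarrow> 'a) set set" where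
  "H0_inv p Fv Fe r Av = {H0_class p Fv Fe r c | c. c \<in> C0 p Fv \<and>
      (\<forall>g \<in> zp p. H0_class p Fv Fe r (chain_act p Av g c) = H0_class p Fv Fe r c)}"

definition C0_inv :: "int \<Rightarrow> (vertex \<Rightarrow> 'a::ab_group_add set)
    \<Rightarrow> ((nat \<Rightarrow> int) \<Rightarrow> vertex \<Rightarrow> 'a \<Rightarrow> 'a) \<Rightarrow> (vertex \<Rightarrow> 'a) set" where
  "C0_inv p Fv Av = {c \<in> C0 p Fv. \<forall>g \<in> zp p. chain_act p Av g c = c}"

end

theory Submission
  imports Defs
begin


lemma p_facts: assumes "prime (p::int)" shows "p > 1" "\<And>n. p ^ n > 0"
  using assms prime_gt_1_int by auto (simp add: prime_gt_0_int)

lemma pow_dvd: "n \<le> m \<Longrightarrow> (p::int) ^ n dvd p ^ m"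
  by (simp add: le_imp_power_dvd)

lemma zp_range: "g \<in> zp p \<Longrightarrow> 0 \<le> g n \<and> g n < p ^ n"
  unfolding zp_def by blast

lemma zp_step: "g \<in> zp p \<Longrightarrow> g (Suc n) mod p ^ n = g n"
  unfolding zp_def by (metis (mono_tags, lifting) mem_Collect_eq)

lemma zp_mod: assumes "g \<in> zp p" "n \<le> m" shows "g m mod p ^ n = g n"
  using assms(2)
proof (induction m)
  case 0 then show ?case using zp_range[OF assms(1), of 0] by simp
next
  case (Suc m)
  show ?case
  proof (cases "n = Suc m")
    case True then show ?thesis using zp_range[OF assms(1), of n]
      by (simp add: mod_pos_pos_trivial)
  next
    case False
    then have "n \<le> m" using Suc by simp
    have "g (Suc m) mod p ^ n = (g (Suc m) mod p ^ m) mod p ^ n"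
      using pow_dvd[OF \<open>n \<le> m\<close>, of p] by (simp add: mod_mod_cancel)
    also have "g (Suc m) mod p ^ m = g m" using zp_step[OF assms(1)] by simp
    finally show ?thesis using Suc.IH[OF \<open>n \<le> m\<close>] by simp
  qed
qed

lemma zp_zero_below: "g \<in> zp p \<Longrightarrow> g m = 0 \<Longrightarrow> n \<le> m \<Longrightarrow> g n = 0"
  using zp_mod[of g p n m] by simp

context fixes p :: int assumes pr: "prime p"
begin

lemma ppos: "p ^ n > 0" using p_facts[OF pr] by auto

lemma zzero_zp: "zzero \<in> zp p"
  by (simp add: zp_def zzero_def ppos)

lemma zadd_zp: assumes "g \<in> zp p" "h \<in> zp p" shows "zadd p g h \<in> zp p"
proof -
  have "\<And>n. (g n + h n) mod p ^ n = ((g (Suc n) + h (Suc n)) mod p ^ Suc n) mod p ^ n"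
  proof -
    fix n
    have d: "p ^ n dvd p ^ Suc n" by simp
    have "((g (Suc n) + h (Suc n)) mod p ^ Suc n) mod p ^ n = (g (Suc n) + h (Suc n)) mod p ^ n"
      using d by (simp add: mod_mod_cancel)
    also have "\<dots> = (g (Suc n) mod p ^ n + h (Suc n) mod p ^ n) mod p ^ n" by (simp add: mod_add_eq)
    also have "\<dots> = (g n + h n) mod p ^ n" using zp_mod[OF assms(1), of n "Suc n"] zp_mod[OF assms(2), of n "Suc n"] by simp
    finally show "(g n + h n) mod p ^ n = ((g (Suc n) + h (Suc n)) mod p ^ Suc n) mod p ^ n" by simp
  qed
  note eq = this
  show ?thesis unfolding zp_def zadd_def mem_Collect_eq
  proof (intro allI conjI)
    fix n show "0 \<le> (g n + h n) mod p ^ n" using ppos[of n] by simp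
    show "(g n + h n) mod p ^ n < p ^ n" using ppos[of n] by simp
    show "(g n + h n) mod p ^ n = (g (Suc n) + h (Suc n)) mod p ^ Suc n mod p ^ n" by (rule eq)
  qed
qed

lemma zneg_zp: assumes "g \<in> zp p" shows "zneg p g \<in> zp p"
proof -
  have "\<And>n. (- g n) mod p ^ n = ((- g (Suc n)) mod p ^ Suc n) mod p ^ n"
  proof -
    fix n
    have d: "p ^ n dvd p ^ Suc n" by simp
    have "((- g (Suc n)) mod p ^ Suc n) mod p ^ n = (- g (Suc n)) mod p ^ n"
      using d by (simp add: mod_mod_cancel)
    also have "\<dots> = (- (g (Suc n) mod p ^ n)) mod p ^ n" by (simp add: mod_minus_eq)
    also have "\<dots> = (- g n) mod p ^ n" using zp_mod[OF assms(1), of n "Suc n"] by simp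
    finally show "(- g n) mod p ^ n = ((- g (Suc n)) mod p ^ Suc n) mod p ^ n" by simp
  qed
  note eq = this
  show ?thesis unfolding zp_def zneg_def mem_Collect_eq
  proof (intro allI conjI)
    fix n show "0 \<le> (- g n) mod p ^ n" using ppos[of n] by simp
    show "(- g n) mod p ^ n < p ^ n" using ppos[of n] by simp
    show "(- g n) mod p ^ n = (- g (Suc n)) mod p ^ Suc n mod p ^ n" by (rule eq)
  qed
qed

lemma zadd_comm: "zadd p g h = zadd p h g"
  by (simp add: zadd_def add.commute)

lemma zadd_assoc: "zadd p (zadd p g h) k = zadd p g (zadd p h k)"
  by (rule ext) (simp add: zadd_def mod_add_left_eq mod_add_right_eq add.assoc)

lemma zadd_zero: "g \<in> zp p \<Longrightarrow> zadd p g zzero = g"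
  by (rule ext) (simp add: zadd_def zzero_def zp_range mod_pos_pos_trivial)

lemma zadd_neg: "zadd p g (zneg p g) = zzero"
  by (rule ext) (simp add: zadd_def zneg_def zzero_def mod_add_right_eq)

lemma vact_pair: "vact p g (n, a) = (n, (a + g n) mod p ^ n)"
  by (simp add: vact_def)

lemma vact_verts: "vact p g x \<in> verts p"
  by (cases x) (simp add: vact_def verts_def ppos)

lemma vact_zero: "x \<in> verts p \<Longrightarrow> vact p zzero x = x"
  by (cases x) (simp add: vact_def verts_def zzero_def mod_pos_pos_trivial)

lemma vact_add: "vact p (zadd p g h) x = vact p g (vact p h x)"
  by (cases x) (simp add: vact_def zadd_def mod_add_left_eq mod_add_right_eq algebra_simps)

lemma vact_neg: "x \<in> verts p \<Longrightarrow> vact p g (vact p (zneg p g) x) = x"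
proof -
  assume "x \<in> verts p"
  have "vact p g (vact p (zneg p g) x) = vact p (zadd p g (zneg p g)) x" by (simp add: vact_add)
  then show ?thesis using vact_zero \<open>x \<in> verts p\<close> by (simp add: zadd_neg)
qed

lemma vact_neg2: "x \<in> verts p \<Longrightarrow> vact p (zneg p g) (vact p g x) = x"
proof -
  assume "x \<in> verts p"
  have "vact p (zneg p g) (vact p g x) = vact p (zadd p g (zneg p g)) x" by (simp add: vact_add[symmetric] zadd_comm)
  then show ?thesis using vact_zero \<open>x \<in> verts p\<close> by (simp add: zadd_neg)
qed

lemma vact_fix: "x \<in> verts p \<Longrightarrow> g (fst x) = 0 \<Longrightarrow> vact p g x = x"
  by (cases x) (simp add: vact_def verts_def mod_pos_pos_trivial)

lemma vact_fix_iff0: assumes a: "0 \<le> a" "a < p ^ n" and g: "g \<in> zp p"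
  shows "vact p g (n, a) = (n, a) \<longleftrightarrow> g n = 0"
proof -
  have 1: "(a + g n) mod p ^ n = a \<longleftrightarrow> g n mod p ^ n = 0"
  proof
    assume h: "(a + g n) mod p ^ n = a"
    have "(a + g n) mod p ^ n = a mod p ^ n" using h a by simp
    hence "p ^ n dvd (a + g n) - a" by (rule mod_eq_dvd_iff[THEN iffD1])
    hence "p ^ n dvd g n" by simp
    thus "g n mod p ^ n = 0" by simp
  next
    assume "g n mod p ^ n = 0"
    hence "p ^ n dvd g n" by (simp add: dvd_eq_mod_eq_0)
    then obtain k where k: "g n = p ^ n * k" by blast
    have "(a + p ^ n * k) mod p ^ n = a mod p ^ n" by simp
    thus "(a + g n) mod p ^ n = a" using k a by simp
  qed
  have 2: "g n mod p ^ n = g n" using zp_range[OF g, of n] by (simp add: mod_pos_pos_trivial)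
  have 3: "vact p g (n, a) = (n, a) \<longleftrightarrow> (a + g n) mod p ^ n = a" by (simp add: vact_def)
  from 3 1 have "vact p g (n, a) = (n, a) \<longleftrightarrow> g n mod p ^ n = 0" by (rule trans)
  also have "\<dots> \<longleftrightarrow> g n = 0" by (subst 2) (rule refl)
  finally show ?thesis .
qed

lemma vact_fix_iff: assumes "x \<in> verts p" "g \<in> zp p" shows "vact p g x = x \<longleftrightarrow> g (fst x) = 0"
proof -
  obtain n a where x: "x = (n, a)" by (cases x)
  have "0 \<le> a" "a < p ^ n" using assms(1) x by (auto simp: verts_def)
  from vact_fix_iff0[OF this assms(2)] show ?thesis using x by simp
qed

end


definition ed :: "int \<Rightarrow> nat \<Rightarrow> int \<Rightarrow> edge" where
  "ed p n b = {(n, b mod p ^ n), (Suc n, b)}"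

lemma ed_inj: "ed p n b = ed p n' b' \<Longrightarrow> n = n' \<and> b = b'"
  unfolding ed_def by (auto simp: doubleton_eq_iff)

context fixes p :: int assumes pr: "prime p"
begin

lemma ppos': "p ^ n > 0" using ppos[OF pr] .

lemma edges_ed: "\<tau> \<in> edges p \<longleftrightarrow> (\<exists>n b. 0 \<le> b \<and> b < p ^ Suc n \<and> \<tau> = ed p n b)"
proof
  assume "\<tau> \<in> edges p"
  then obtain n a b where "\<tau> = {(n, a), (Suc n, b)}" "(Suc n, b) \<in> verts p" "b mod p ^ n = a"
    unfolding edges_def by blast
  then show "\<exists>n b. 0 \<le> b \<and> b < p ^ Suc n \<and> \<tau> = ed p n b"
    by (auto simp: verts_def ed_def simp del: power_Suc)
next
  assume "\<exists>n b. 0 \<le> b \<and> b < p ^ Suc n \<and> \<tau> = ed p n b"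
  then obtain n b where nb: "0 \<le> b" "b < p ^ Suc n" "\<tau> = ed p n b" by blast
  have "(n, b mod p ^ n) \<in> verts p" using ppos'[of n] by (simp add: verts_def)
  moreover have "(Suc n, b) \<in> verts p" using nb by (simp add: verts_def)
  ultimately show "\<tau> \<in> edges p" unfolding edges_def ed_def nb(3) by blast
qed

lemma ed_edge: "0 \<le> b \<Longrightarrow> b < p ^ Suc n \<Longrightarrow> ed p n b \<in> edges p"
  using edges_ed by blast

lemma edges_sub_verts: "\<tau> \<in> edges p \<Longrightarrow> x \<in> \<tau> \<Longrightarrow> x \<in> verts p"
  unfolding edges_def by auto

lemma eact_ed: assumes "g \<in> zp p"
  shows "eact p g (ed p n b) = ed p n ((b + g (Suc n)) mod p ^ Suc n)"
proof -
  have "((b + g (Suc n)) mod p ^ Suc n) mod p ^ n = (b + g (Suc n)) mod p ^ n"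
    by (rule mod_mod_cancel) (simp add: le_imp_power_dvd del: power_Suc)
  also have "\<dots> = (b + g (Suc n) mod p ^ n) mod p ^ n" by (simp add: mod_add_right_eq)
  also have "\<dots> = (b mod p ^ n + g n) mod p ^ n" using zp_mod[OF assms, of n "Suc n"] by (simp add: mod_add_left_eq)
  finally have "(b mod p ^ n + g n) mod p ^ n = ((b + g (Suc n)) mod p ^ Suc n) mod p ^ n" by simp
  then show ?thesis unfolding eact_def ed_def by (simp add: vact_def del: power_Suc)
qed

lemma eact_edges: assumes "g \<in> zp p" "\<tau> \<in> edges p" shows "eact p g \<tau> \<in> edges p"
proof -
  obtain n b where "\<tau> = ed p n b" using assms(2) edges_ed by blast
  then show ?thesis using eact_ed[OF assms(1)] ed_edge ppos'[of "Suc n"]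
    by (simp del: power_Suc)
qed

lemma eact_add: "eact p (zadd p g h) \<tau> = eact p g (eact p h \<tau>)"
  unfolding eact_def by (simp add: image_image vact_add[OF pr])

lemma eact_zero: "\<tau> \<in> edges p \<Longrightarrow> eact p zzero \<tau> = \<tau>"
  unfolding eact_def using vact_zero[OF pr] edges_sub_verts by (simp cong: image_cong)

lemma eact_neg: "\<tau> \<in> edges p \<Longrightarrow> eact p g (eact p (zneg p g) \<tau>) = \<tau>"
  unfolding eact_def using vact_neg[OF pr] edges_sub_verts by (simp add: image_image cong: image_cong)

lemma eact_neg2: "\<tau> \<in> edges p \<Longrightarrow> eact p (zneg p g) (eact p g \<tau>) = \<tau>"
  unfolding eact_def using vact_neg2[OF pr] edges_sub_verts by (simp add: image_image cong: image_cong)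

lemma eact_mem: "x \<in> \<tau> \<Longrightarrow> vact p g x \<in> eact p g \<tau>"
  unfolding eact_def by simp

lemma eact_mem_iff: "\<tau> \<in> edges p \<Longrightarrow> x \<in> verts p \<Longrightarrow> vact p g x \<in> eact p g \<tau> \<longleftrightarrow> x \<in> \<tau>"
proof
  assume "\<tau> \<in> edges p" "x \<in> verts p" and h: "vact p g x \<in> eact p g \<tau>"
  have "vact p (zneg p g) (vact p g x) \<in> eact p (zneg p g) (eact p g \<tau>)" by (rule eact_mem[OF h])
  then show "x \<in> \<tau>" using \<open>\<tau> \<in> edges p\<close> \<open>x \<in> verts p\<close> by (simp add: vact_neg2[OF pr] eact_neg2)
qed (rule eact_mem)

lemma eact_inj: "\<tau> \<in> edges p \<Longrightarrow> \<sigma> \<in> edges p \<Longrightarrow> eact p g \<tau> = eact p g \<sigma> \<Longrightarrow> \<tau> = \<sigma>"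
  by (metis eact_neg2)

definition low_verts :: "nat \<Rightarrow> vertex set" where
  "low_verts M = {x \<in> verts p. fst x \<le> M}"

lemma finite_low_verts: "finite (low_verts M)"
proof -
  have "low_verts M \<subseteq> {0..M} \<times> {0..<p ^ M}"
  proof
    fix x assume "x \<in> low_verts M"
    then obtain n a where x: "x = (n, a)" "0 \<le> a" "a < p ^ n" "n \<le> M" by (auto simp: low_verts_def verts_def)
    have "p ^ n \<le> p ^ M" using x(4) p_facts[OF pr] by (simp add: power_increasing)
    then show "x \<in> {0..M} \<times> {0..<p ^ M}" using x by auto
  qed
  then show ?thesis by (rule finite_subset) simp
qed

lemma finite_edges_upto: "finite {\<tau> \<in> edges p. \<forall>x \<in> \<tau>. fst x \<le> M}"
proof -
  have "{\<tau> \<in> edges p. \<forall>x \<in> \<tau>. fst x \<le> M} \<subseteq> Pow (low_verts M)"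
  proof (rule subsetI)
    fix \<tau> assume h: "\<tau> \<in> {\<tau> \<in> edges p. \<forall>x \<in> \<tau>. fst x \<le> M}"
    have "\<forall>x \<in> \<tau>. x \<in> low_verts M" unfolding low_verts_def using h edges_sub_verts by blast
    then show "\<tau> \<in> Pow (low_verts M)" by blast
  qed
  moreover have "finite (Pow (low_verts M))" using finite_low_verts by simp
  ultimately show ?thesis by (rule finite_subset)
qed

lemma ed_level: "x \<in> ed p n b \<Longrightarrow> fst x = n \<or> fst x = Suc n"
  unfolding ed_def by auto

lemma finite_edges_at: "finite {\<tau> \<in> edges p. x \<in> \<tau>}"
proof -
  have "{\<tau> \<in> edges p. x \<in> \<tau>} \<subseteq> {\<tau> \<in> edges p. \<forall>y \<in> \<tau>. fst y \<le> Suc (fst x)}"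
  proof safe
    fix \<tau> y assume "\<tau> \<in> edges p" "x \<in> \<tau>" "y \<in> \<tau>"
    then obtain n b where "\<tau> = ed p n b" using edges_ed by blast
    then show "fst y \<le> Suc (fst x)" using ed_level[of x n b] ed_level[of y n b] \<open>x \<in> \<tau>\<close> \<open>y \<in> \<tau>\<close> by auto
  qed
  then show ?thesis using finite_edges_upto by (rule finite_subset)
qed

lemma finite_level_edges: "finite {ed p k b | b. 0 \<le> b \<and> b < p ^ Suc k}"
proof -
  have "{ed p k b | b. 0 \<le> b \<and> b < p ^ Suc k} \<subseteq> {\<tau> \<in> edges p. \<forall>y \<in> \<tau>. fst y \<le> Suc k}"
  proof safe
    fix b assume "0 \<le> b" "b < p ^ Suc k"
    then show "ed p k b \<in> edges p" by (rule ed_edge)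
  next
    fix b y assume "y \<in> ed p k b" then show "fst y \<le> Suc k" using ed_level[of y k b] by auto
  qed
  then show ?thesis using finite_edges_upto by (rule finite_subset)
qed

end


lemma sg_zero: "subgrp A \<Longrightarrow> 0 \<in> A" by (simp add: subgrp_def)
lemma sg_add: "subgrp A \<Longrightarrow> a \<in> A \<Longrightarrow> b \<in> A \<Longrightarrow> a + b \<in> A" by (simp add: subgrp_def)
lemma sg_neg: "subgrp A \<Longrightarrow> a \<in> A \<Longrightarrow> - a \<in> A" by (simp add: subgrp_def)
lemma sg_diff: "subgrp A \<Longrightarrow> a \<in> A \<Longrightarrow> b \<in> A \<Longrightarrow> a - b \<in> A"
  using sg_add[of A a "- b"] sg_neg[of A b] by simp

lemma sg_sum: assumes "subgrp A" "\<forall>i\<in>S. u i \<in> A" shows "sum u S \<in> A"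
  using assms(2)
proof (induction S rule: infinite_finite_induct)
  case (infinite S) then show ?case using sg_zero[OF assms(1)] by simp
next
  case empty then show ?case using sg_zero[OF assms(1)] by simp
next
  case (insert x F) then show ?case using sg_add[OF assms(1)] by simp
qed

lemma ad_mem: "additive_on A f B \<Longrightarrow> a \<in> A \<Longrightarrow> f a \<in> B" by (simp add: additive_on_def)
lemma ad_add: "additive_on A f B \<Longrightarrow> a \<in> A \<Longrightarrow> b \<in> A \<Longrightarrow> f (a + b) = f a + f b" by (simp add: additive_on_def)
lemma ad_zero: assumes "subgrp A" "additive_on A f B" shows "f 0 = 0"
proof -
  have "f (0 + 0) = f 0 + f 0" using ad_add[OF assms(2)] sg_zero[OF assms(1)] by blast
  then show ?thesis by simp
qed
lemma ad_neg: assumes "subgrp A" "additive_on A f B" "a \<in> A" shows "f (- a) = - f a"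
proof -
  have "f (a + - a) = f a + f (- a)" using ad_add[OF assms(2) assms(3) sg_neg[OF assms(1,3)]] .
  then show ?thesis using ad_zero[OF assms(1,2)] by (simp add: eq_neg_iff_add_eq_0 add.commute)
qed
lemma ad_diff: assumes "subgrp A" "additive_on A f B" "a \<in> A" "b \<in> A" shows "f (a - b) = f a - f b"
  using ad_add[OF assms(2) assms(3) sg_neg[OF assms(1,4)]] ad_neg[OF assms(1,2,4)] by simp
lemma ad_sum: assumes "subgrp A" "additive_on A f B" "\<forall>i\<in>S. u i \<in> A"
  shows "f (sum u S) = (\<Sum>i\<in>S. f (u i))"
  using assms(3)
proof (induction S rule: infinite_finite_induct)
  case (infinite S) then show ?case using ad_zero[OF assms(1,2)] by simp
next
  case empty then show ?case using ad_zero[OF assms(1,2)] by simp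
next
  case (insert x F)
  have "f (sum u (insert x F)) = f (u x + sum u F)" using insert by simp
  also have "\<dots> = f (u x) + f (sum u F)"
    using ad_add[OF assms(2)] insert sg_sum[OF assms(1), of F u] by simp
  finally show ?case using insert by simp
qed

definition edge_act :: "int \<Rightarrow> ((nat \<Rightarrow> int) \<Rightarrow> edge \<Rightarrow> 'a::ab_group_add \<Rightarrow> 'a)
    \<Rightarrow> (nat \<Rightarrow> int) \<Rightarrow> (edge \<Rightarrow> 'a) \<Rightarrow> (edge \<Rightarrow> 'a)" where
  "edge_act p Ae g y = (\<lambda>\<tau>. if \<tau> \<in> edges p
       then Ae g (eact p (zneg p g) \<tau>) (y (eact p (zneg p g) \<tau>)) else 0)"

lemma vact_cong: assumes "g (fst x) mod p ^ fst x = h (fst x) mod p ^ fst x" shows "vact p g x = vact p h x"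
proof (cases x)
  case (Pair n a)
  have "(a + g n) mod p ^ n = (a + h n) mod p ^ n" using assms Pair by (metis fst_conv mod_add_right_eq)
  thus ?thesis using Pair by (simp add: vact_def)
qed

lemma vact_neg_add: "vact p (zneg p (zadd p g h)) x = vact p (zneg p h) (vact p (zneg p g) x)"
proof -
  have "\<And>n. zneg p (zadd p g h) n mod p ^ n = zadd p (zneg p h) (zneg p g) n mod p ^ n"
  proof -
    fix n
    have "zneg p (zadd p g h) n = (- ((g n + h n) mod p ^ n)) mod p ^ n" by (simp add: zneg_def zadd_def)
    also have "\<dots> = (- (g n + h n)) mod p ^ n" by (rule mod_minus_eq)
    also have "\<dots> = ((- h n) + (- g n)) mod p ^ n" by (simp add: algebra_simps)
    also have "\<dots> = ((- h n) mod p ^ n + (- g n) mod p ^ n) mod p ^ n" by (rule mod_add_eq[symmetric])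
    also have "\<dots> = zadd p (zneg p h) (zneg p g) n" by (simp add: zneg_def zadd_def)
    finally show "zneg p (zadd p g h) n mod p ^ n = zadd p (zneg p h) (zneg p g) n mod p ^ n" by simp
  qed
  then have "vact p (zneg p (zadd p g h)) x = vact p (zadd p (zneg p h) (zneg p g)) x"
    by (intro vact_cong) blast
  also have "\<dots> = vact p (zneg p h) (vact p (zneg p g) x)"
    by (cases x) (simp add: vact_def zadd_def mod_add_left_eq mod_add_right_eq add.assoc add.commute[of "zneg p h _"])
  finally show ?thesis .
qed

lemma eact_neg_add: "eact p (zneg p (zadd p g h)) \<tau> = eact p (zneg p h) (eact p (zneg p g) \<tau>)"
  unfolding eact_def by (simp add: image_image vact_neg_add)

locale CS =
  fixes p :: int and Fv :: "vertex \<Rightarrow> 'a::ab_group_add set" and Fe :: "edge \<Rightarrow> 'a set"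
    and r :: "edge \<Rightarrow> vertex \<Rightarrow> 'a \<Rightarrow> 'a"
    and Av :: "(nat \<Rightarrow> int) \<Rightarrow> vertex \<Rightarrow> 'a \<Rightarrow> 'a"
    and Ae :: "(nat \<Rightarrow> int) \<Rightarrow> edge \<Rightarrow> 'a \<Rightarrow> 'a"
  assumes pr: "prime p"
    and cs: "coeff_sys p Fv Fe r Av Ae"
    and sm: "smooth_sys p Fv Fe Av Ae"
    and rinj: "\<forall>\<tau> \<in> edges p. \<forall>x \<in> \<tau>. inj_on (r \<tau> x) (Fe \<tau>)"
begin

lemma Fv_sg: "x \<in> verts p \<Longrightarrow> subgrp (Fv x)" using cs by (simp add: coeff_sys_def)
lemma Fe_sg: "\<tau> \<in> edges p \<Longrightarrow> subgrp (Fe \<tau>)" using cs by (simp add: coeff_sys_def)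
lemma r_ad: "\<tau> \<in> edges p \<Longrightarrow> x \<in> \<tau> \<Longrightarrow> additive_on (Fe \<tau>) (r \<tau> x) (Fv x)" using cs by (simp add: coeff_sys_def)
lemma Av_ad: "g \<in> zp p \<Longrightarrow> x \<in> verts p \<Longrightarrow> additive_on (Fv x) (Av g x) (Fv (vact p g x))"
  using cs by (simp add: coeff_sys_def)
lemma Ae_ad: "g \<in> zp p \<Longrightarrow> \<tau> \<in> edges p \<Longrightarrow> additive_on (Fe \<tau>) (Ae g \<tau>) (Fe (eact p g \<tau>))"
  using cs by (simp add: coeff_sys_def)
lemma Av_zz: "x \<in> verts p \<Longrightarrow> m \<in> Fv x \<Longrightarrow> Av zzero x m = m" using cs by (simp add: coeff_sys_def)
lemma Ae_zz: "\<tau> \<in> edges p \<Longrightarrow> m \<in> Fe \<tau> \<Longrightarrow> Ae zzero \<tau> m = m" using cs by (simp add: coeff_sys_def)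
lemma Av_comp: "g \<in> zp p \<Longrightarrow> h \<in> zp p \<Longrightarrow> x \<in> verts p \<Longrightarrow> m \<in> Fv x \<Longrightarrow>
    Av (zadd p g h) x m = Av g (vact p h x) (Av h x m)"
  using cs unfolding coeff_sys_def by blast
lemma Ae_comp: "g \<in> zp p \<Longrightarrow> h \<in> zp p \<Longrightarrow> \<tau> \<in> edges p \<Longrightarrow> m \<in> Fe \<tau> \<Longrightarrow>
    Ae (zadd p g h) \<tau> m = Ae g (eact p h \<tau>) (Ae h \<tau> m)"
  using cs unfolding coeff_sys_def by blast
lemma r_eq: "g \<in> zp p \<Longrightarrow> \<tau> \<in> edges p \<Longrightarrow> x \<in> \<tau> \<Longrightarrow> m \<in> Fe \<tau> \<Longrightarrow>
    r (eact p g \<tau>) (vact p g x) (Ae g \<tau> m) = Av g x (r \<tau> x m)"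
  using cs unfolding coeff_sys_def by blast

lemma Av_mem: "g \<in> zp p \<Longrightarrow> x \<in> verts p \<Longrightarrow> m \<in> Fv x \<Longrightarrow> Av g x m \<in> Fv (vact p g x)"
  using ad_mem[OF Av_ad] .
lemma Ae_mem: "g \<in> zp p \<Longrightarrow> \<tau> \<in> edges p \<Longrightarrow> m \<in> Fe \<tau> \<Longrightarrow> Ae g \<tau> m \<in> Fe (eact p g \<tau>)"
  using ad_mem[OF Ae_ad] .
lemma r_mem: "\<tau> \<in> edges p \<Longrightarrow> x \<in> \<tau> \<Longrightarrow> m \<in> Fe \<tau> \<Longrightarrow> r \<tau> x m \<in> Fv x"
  using ad_mem[OF r_ad] .
lemma Av_0: "g \<in> zp p \<Longrightarrow> x \<in> verts p \<Longrightarrow> Av g x 0 = 0"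
  using ad_zero[OF Fv_sg Av_ad] .
lemma Ae_0: "g \<in> zp p \<Longrightarrow> \<tau> \<in> edges p \<Longrightarrow> Ae g \<tau> 0 = 0"
  using ad_zero[OF Fe_sg Ae_ad] .
lemma r_0: "\<tau> \<in> edges p \<Longrightarrow> x \<in> \<tau> \<Longrightarrow> r \<tau> x 0 = 0"
  using ad_zero[OF Fe_sg r_ad] .

lemma zneg_zp': "g \<in> zp p \<Longrightarrow> zneg p g \<in> zp p" using zneg_zp[OF pr] .
lemma zadd_zp': "g \<in> zp p \<Longrightarrow> h \<in> zp p \<Longrightarrow> zadd p g h \<in> zp p" using zadd_zp[OF pr] .

lemma C0_mem: "c \<in> C0 p Fv \<Longrightarrow> x \<in> verts p \<Longrightarrow> c x \<in> Fv x" by (simp add: C0_def)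
lemma C0_out: "c \<in> C0 p Fv \<Longrightarrow> x \<notin> verts p \<Longrightarrow> c x = 0" unfolding C0_def by blast
lemma C0_fin: "c \<in> C0 p Fv \<Longrightarrow> finite {x. c x \<noteq> 0}" by (simp add: C0_def)
lemma C1_mem: "y \<in> C1 p Fe \<Longrightarrow> \<tau> \<in> edges p \<Longrightarrow> y \<tau> \<in> Fe \<tau>" by (simp add: C1_def)
lemma C1_out: "y \<in> C1 p Fe \<Longrightarrow> \<tau> \<notin> edges p \<Longrightarrow> y \<tau> = 0" unfolding C1_def by blast
lemma C1_fin: "y \<in> C1 p Fe \<Longrightarrow> finite {\<tau>. y \<tau> \<noteq> 0}" by (simp add: C1_def)

lemma C0_add: assumes "c \<in> C0 p Fv" "d \<in> C0 p Fv" shows "c + d \<in> C0 p Fv"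
proof -
  have "{x. (c + d) x \<noteq> 0} \<subseteq> {x. c x \<noteq> 0} \<union> {x. d x \<noteq> 0}" by auto
  then have "finite {x. (c + d) x \<noteq> 0}" using C0_fin[OF assms(1)] C0_fin[OF assms(2)] finite_subset by blast
  then show ?thesis using assms sg_add[OF Fv_sg] unfolding C0_def by simp
qed
lemma C0_neg: assumes "c \<in> C0 p Fv" shows "- c \<in> C0 p Fv"
  using assms sg_neg[OF Fv_sg] unfolding C0_def by simp
lemma C0_diff: "c \<in> C0 p Fv \<Longrightarrow> d \<in> C0 p Fv \<Longrightarrow> c - d \<in> C0 p Fv"
  using C0_add[OF _ C0_neg, of c d] by simp
lemma C0_zero: "0 \<in> C0 p Fv" using sg_zero[OF Fv_sg] unfolding C0_def by simp

lemma C1_add: assumes "c \<in> C1 p Fe" "d \<in> C1 p Fe" shows "c + d \<in> C1 p Fe"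
proof -
  have "{x. (c + d) x \<noteq> 0} \<subseteq> {x. c x \<noteq> 0} \<union> {x. d x \<noteq> 0}" by auto
  then have "finite {x. (c + d) x \<noteq> 0}" using C1_fin[OF assms(1)] C1_fin[OF assms(2)] finite_subset by blast
  then show ?thesis using assms sg_add[OF Fe_sg] unfolding C1_def by simp
qed
lemma C1_neg: assumes "c \<in> C1 p Fe" shows "- c \<in> C1 p Fe"
  using assms sg_neg[OF Fe_sg] unfolding C1_def by simp
lemma C1_diff: "c \<in> C1 p Fe \<Longrightarrow> d \<in> C1 p Fe \<Longrightarrow> c - d \<in> C1 p Fe"
  using C1_add[OF _ C1_neg, of c d] by simp
lemma C1_zero: "0 \<in> C1 p Fe" using sg_zero[OF Fe_sg] unfolding C1_def by simp

lemma chain_act_C0: assumes g: "g \<in> zp p" and c: "c \<in> C0 p Fv" shows "chain_act p Av g c \<in> C0 p Fv"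
proof -
  have sub: "{x. chain_act p Av g c x \<noteq> 0} \<subseteq> vact p g ` {x. c x \<noteq> 0}"
  proof
    fix x assume "x \<in> {x. chain_act p Av g c x \<noteq> 0}"
    then have x: "x \<in> verts p" "Av g (vact p (zneg p g) x) (c (vact p (zneg p g) x)) \<noteq> 0"
      by (auto simp: chain_act_def split: if_splits)
    then have "c (vact p (zneg p g) x) \<noteq> 0" using Av_0[OF g vact_verts[OF pr, of "zneg p g" x]] by metis
    moreover have "x = vact p g (vact p (zneg p g) x)" using vact_neg[OF pr x(1)] by simp
    ultimately show "x \<in> vact p g ` {x. c x \<noteq> 0}" by blast
  qed
  have "finite {x. chain_act p Av g c x \<noteq> 0}"
    by (rule finite_subset[OF sub]) (simp add: C0_fin[OF c])
  moreover have "\<forall>x \<in> verts p. chain_act p Av g c x \<in> Fv x"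
  proof
    fix x assume x: "x \<in> verts p"
    have "Av g (vact p (zneg p g) x) (c (vact p (zneg p g) x)) \<in> Fv (vact p g (vact p (zneg p g) x))"
      by (rule Av_mem[OF g vact_verts[OF pr] C0_mem[OF c vact_verts[OF pr]]])
    then show "chain_act p Av g c x \<in> Fv x" using x vact_neg[OF pr x] by (simp add: chain_act_def)
  qed
  ultimately show ?thesis unfolding C0_def by (simp add: chain_act_def)
qed

lemma edge_act_C1: assumes g: "g \<in> zp p" and c: "c \<in> C1 p Fe" shows "edge_act p Ae g c \<in> C1 p Fe"
proof -
  have g': "zneg p g \<in> zp p" using zneg_zp' g .
  have sub: "{x. edge_act p Ae g c x \<noteq> 0} \<subseteq> eact p g ` {x. c x \<noteq> 0}"
  proof
    fix x assume "x \<in> {x. edge_act p Ae g c x \<noteq> 0}"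
    then have x: "x \<in> edges p" "Ae g (eact p (zneg p g) x) (c (eact p (zneg p g) x)) \<noteq> 0"
      by (auto simp: edge_act_def split: if_splits)
    then have "c (eact p (zneg p g) x) \<noteq> 0" using Ae_0[OF g eact_edges[OF pr g' x(1)]] by metis
    moreover have "x = eact p g (eact p (zneg p g) x)" using eact_neg[OF pr x(1)] by simp
    ultimately show "x \<in> eact p g ` {x. c x \<noteq> 0}" by blast
  qed
  have "finite {x. edge_act p Ae g c x \<noteq> 0}"
    by (rule finite_subset[OF sub]) (simp add: C1_fin[OF c])
  moreover have "\<forall>x \<in> edges p. edge_act p Ae g c x \<in> Fe x"
  proof
    fix x assume x: "x \<in> edges p"
    have "Ae g (eact p (zneg p g) x) (c (eact p (zneg p g) x)) \<in> Fe (eact p g (eact p (zneg p g) x))"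
      by (rule Ae_mem[OF g eact_edges[OF pr g' x] C1_mem[OF c eact_edges[OF pr g' x]]])
    then show "edge_act p Ae g c x \<in> Fe x" using x eact_neg[OF pr x] by (simp add: edge_act_def)
  qed
  ultimately show ?thesis unfolding C1_def by (simp add: edge_act_def)
qed

lemma chain_act_add: assumes g: "g \<in> zp p" and c: "c \<in> C0 p Fv" "d \<in> C0 p Fv"
  shows "chain_act p Av g (c + d) = chain_act p Av g c + chain_act p Av g d"
proof
  fix x
  show "chain_act p Av g (c + d) x = (chain_act p Av g c + chain_act p Av g d) x"
  proof (cases "x \<in> verts p")
    case True
    let ?x = "vact p (zneg p g) x"
    have "?x \<in> verts p" by (rule vact_verts[OF pr])
    then show ?thesis using True ad_add[OF Av_ad[OF g] C0_mem[OF c(1)] C0_mem[OF c(2)]]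
      by (simp add: chain_act_def)
  qed (simp add: chain_act_def)
qed

lemma chain_act_neg: assumes g: "g \<in> zp p" and c: "c \<in> C0 p Fv"
  shows "chain_act p Av g (- c) = - chain_act p Av g c"
proof
  fix x
  show "chain_act p Av g (- c) x = (- chain_act p Av g c) x"
  proof (cases "x \<in> verts p")
    case True
    let ?x = "vact p (zneg p g) x"
    have "?x \<in> verts p" by (rule vact_verts[OF pr])
    then show ?thesis using True ad_neg[OF Fv_sg Av_ad[OF g] C0_mem[OF c]]
      by (simp add: chain_act_def)
  qed (simp add: chain_act_def)
qed

lemma chain_act_diff: assumes g: "g \<in> zp p" and c: "c \<in> C0 p Fv" "d \<in> C0 p Fv"
  shows "chain_act p Av g (c - d) = chain_act p Av g c - chain_act p Av g d"
  using chain_act_add[OF g c(1) C0_neg[OF c(2)]] chain_act_neg[OF g c(2)] by simp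

lemma edge_act_add: assumes g: "g \<in> zp p" and c: "c \<in> C1 p Fe" "d \<in> C1 p Fe"
  shows "edge_act p Ae g (c + d) = edge_act p Ae g c + edge_act p Ae g d"
proof
  fix x
  show "edge_act p Ae g (c + d) x = (edge_act p Ae g c + edge_act p Ae g d) x"
  proof (cases "x \<in> edges p")
    case True
    let ?x = "eact p (zneg p g) x"
    have "?x \<in> edges p" by (rule eact_edges[OF pr zneg_zp'[OF g] True])
    then show ?thesis using True ad_add[OF Ae_ad[OF g] C1_mem[OF c(1)] C1_mem[OF c(2)]]
      by (simp add: edge_act_def)
  qed (simp add: edge_act_def)
qed

lemma edge_act_neg: assumes g: "g \<in> zp p" and c: "c \<in> C1 p Fe"
  shows "edge_act p Ae g (- c) = - edge_act p Ae g c"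
proof
  fix x
  show "edge_act p Ae g (- c) x = (- edge_act p Ae g c) x"
  proof (cases "x \<in> edges p")
    case True
    let ?x = "eact p (zneg p g) x"
    have "?x \<in> edges p" by (rule eact_edges[OF pr zneg_zp'[OF g] True])
    then show ?thesis using True ad_neg[OF Fe_sg Ae_ad[OF g] C1_mem[OF c]]
      by (simp add: edge_act_def)
  qed (simp add: edge_act_def)
qed

lemma edge_act_diff: assumes g: "g \<in> zp p" and c: "c \<in> C1 p Fe" "d \<in> C1 p Fe"
  shows "edge_act p Ae g (c - d) = edge_act p Ae g c - edge_act p Ae g d"
  using edge_act_add[OF g c(1) C1_neg[OF c(2)]] edge_act_neg[OF g c(2)] by simp

lemma edge_act_zero: assumes "g \<in> zp p" shows "edge_act p Ae g 0 = 0"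
proof -
  have "\<And>\<tau>. \<tau> \<in> edges p \<Longrightarrow> Ae g (eact p (zneg p g) \<tau>) 0 = 0"
    using Ae_0[OF assms eact_edges[OF pr zneg_zp'[OF assms]]] .
  then show ?thesis by (auto simp: edge_act_def)
qed

lemma chain_act_comp: assumes g: "g \<in> zp p" and h: "h \<in> zp p" and c: "c \<in> C0 p Fv"
  shows "chain_act p Av (zadd p g h) c = chain_act p Av g (chain_act p Av h c)"
proof
  fix x
  show "chain_act p Av (zadd p g h) c x = chain_act p Av g (chain_act p Av h c) x"
  proof (cases "x \<in> verts p")
    case True
    define x1 where "x1 = vact p (zneg p g) x"
    define x2 where "x2 = vact p (zneg p h) x1"
    have x1: "x1 \<in> verts p" and x2: "x2 \<in> verts p" unfolding x1_def x2_def by (rule vact_verts[OF pr])+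
    have e: "vact p (zneg p (zadd p g h)) x = x2" unfolding x2_def x1_def by (rule vact_neg_add)
    have "Av (zadd p g h) x2 (c x2) = Av g (vact p h x2) (Av h x2 (c x2))"
      by (rule Av_comp[OF g h x2 C0_mem[OF c x2]])
    also have "vact p h x2 = x1" unfolding x2_def by (rule vact_neg[OF pr x1])
    finally show ?thesis using True x1 e by (simp add: chain_act_def x2_def[symmetric] x1_def[symmetric])
  qed (simp add: chain_act_def)
qed

lemma edge_act_comp: assumes g: "g \<in> zp p" and h: "h \<in> zp p" and c: "c \<in> C1 p Fe"
  shows "edge_act p Ae (zadd p g h) c = edge_act p Ae g (edge_act p Ae h c)"
proof
  fix x
  show "edge_act p Ae (zadd p g h) c x = edge_act p Ae g (edge_act p Ae h c) x"
  proof (cases "x \<in> edges p")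
    case True
    define x1 where "x1 = eact p (zneg p g) x"
    define x2 where "x2 = eact p (zneg p h) x1"
    have x1: "x1 \<in> edges p" unfolding x1_def by (rule eact_edges[OF pr zneg_zp'[OF g] True])
    have x2: "x2 \<in> edges p" unfolding x2_def by (rule eact_edges[OF pr zneg_zp'[OF h] x1])
    have e: "eact p (zneg p (zadd p g h)) x = x2" unfolding x2_def x1_def by (rule eact_neg_add)
    have "Ae (zadd p g h) x2 (c x2) = Ae g (eact p h x2) (Ae h x2 (c x2))"
      by (rule Ae_comp[OF g h x2 C1_mem[OF c x2]])
    also have "eact p h x2 = x1" unfolding x2_def by (rule eact_neg[OF pr x1])
    finally show ?thesis using True x1 e by (simp add: edge_act_def x2_def[symmetric] x1_def[symmetric])
  qed (simp add: edge_act_def)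
qed

end


context CS begin

declare split_paired_All[simp del] split_paired_Ex[simp del]

abbreviation E :: "vertex \<Rightarrow> edge set" where "E x \<equiv> {\<tau> \<in> edges p. x \<in> \<tau>}"

lemma bdry_app: "bdry p r y x = (\<Sum>\<tau> \<in> E x. r \<tau> x (y \<tau>))" by (simp add: bdry_def)

lemma E_empty: "x \<notin> verts p \<Longrightarrow> E x = {}" using edges_sub_verts[OF pr] by blast

lemma edge_finite: "\<tau> \<in> edges p \<Longrightarrow> finite \<tau>"
  using edges_ed[OF pr] by (auto simp: ed_def)

lemma bdry_C0: assumes y: "y \<in> C1 p Fe" shows "bdry p r y \<in> C0 p Fv"
proof -
  have sub: "{x. bdry p r y x \<noteq> 0} \<subseteq> \<Union> ({\<tau>. y \<tau> \<noteq> 0})"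
  proof
    fix x assume "x \<in> {x. bdry p r y x \<noteq> 0}"
    then have "(\<Sum>\<tau> \<in> E x. r \<tau> x (y \<tau>)) \<noteq> 0" by (simp add: bdry_app)
    then obtain \<tau> where t: "\<tau> \<in> E x" "r \<tau> x (y \<tau>) \<noteq> 0" using sum.neutral by (metis (no_types, lifting))
    then have "y \<tau> \<noteq> 0" using r_0[of \<tau> x] by auto
    then show "x \<in> \<Union> ({\<tau>. y \<tau> \<noteq> 0})" using t by blast
  qed
  have "finite (\<Union> ({\<tau>. y \<tau> \<noteq> 0}))"
  proof (rule finite_Union)
    show "finite {\<tau>. y \<tau> \<noteq> 0}" by (rule C1_fin[OF y])
    show "\<And>\<tau>. \<tau> \<in> {\<tau>. y \<tau> \<noteq> 0} \<Longrightarrow> finite \<tau>" using C1_out[OF y] edge_finite by auto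
  qed
  then have fin: "finite {x. bdry p r y x \<noteq> 0}" using sub finite_subset by blast
  have mem: "\<forall>x \<in> verts p. bdry p r y x \<in> Fv x"
  proof
    fix x assume x: "x \<in> verts p"
    show "bdry p r y x \<in> Fv x" unfolding bdry_app
      by (rule sg_sum[OF Fv_sg[OF x]]) (auto intro!: r_mem C1_mem[OF y])
  qed
  have out: "\<forall>x. x \<notin> verts p \<longrightarrow> bdry p r y x = 0"
  proof (intro allI impI)
    fix x assume "x \<notin> verts p" then show "bdry p r y x = 0" by (simp add: bdry_app E_empty)
  qed
  show ?thesis unfolding C0_def using fin mem out by blast
qed

lemma bdry_add: assumes "y \<in> C1 p Fe" "z \<in> C1 p Fe" shows "bdry p r (y + z) = bdry p r y + bdry p r z"
proof
  fix x
  have h: "\<And>\<tau>. \<tau> \<in> E x \<Longrightarrow> r \<tau> x ((y + z) \<tau>) = r \<tau> x (y \<tau>) + r \<tau> x (z \<tau>)"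
    using ad_add[OF r_ad] C1_mem assms by simp
  have "bdry p r (y + z) x = (\<Sum>\<tau>\<in>E x. r \<tau> x (y \<tau>) + r \<tau> x (z \<tau>))"
    unfolding bdry_app by (rule sum.cong[OF refl h])
  then show "bdry p r (y + z) x = (bdry p r y + bdry p r z) x"
    by (simp add: bdry_app sum.distrib)
qed

lemma bdry_neg: assumes "y \<in> C1 p Fe" shows "bdry p r (- y) = - bdry p r y"
proof
  fix x
  have h: "\<And>\<tau>. \<tau> \<in> E x \<Longrightarrow> r \<tau> x ((- y) \<tau>) = - r \<tau> x (y \<tau>)"
    using ad_neg[OF Fe_sg r_ad] C1_mem assms by simp
  have "bdry p r (- y) x = (\<Sum>\<tau>\<in>E x. - r \<tau> x (y \<tau>))"
    unfolding bdry_app by (rule sum.cong[OF refl h])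
  then show "bdry p r (- y) x = (- bdry p r y) x"
    by (simp add: bdry_app sum_negf)
qed

lemma bdry_diff: "y \<in> C1 p Fe \<Longrightarrow> z \<in> C1 p Fe \<Longrightarrow> bdry p r (y - z) = bdry p r y - bdry p r z"
  using bdry_add[OF _ C1_neg, of y z] bdry_neg[of z] by simp

lemma bdry_zero: "bdry p r 0 = 0"
proof
  fix x show "bdry p r 0 x = 0 x" using r_0 by (simp add: bdry_app)
qed

lemma E_bij: assumes g: "g \<in> zp p" and x: "x \<in> verts p"
  shows "bij_betw (eact p g) (E (vact p (zneg p g) x)) (E x)"
proof -
  have g': "zneg p g \<in> zp p" by (rule zneg_zp'[OF g])
  have "inj_on (eact p g) (E (vact p (zneg p g) x))" by (rule inj_onI) (auto dest: eact_inj[OF pr])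
  moreover have "eact p g ` E (vact p (zneg p g) x) = E x"
  proof
    show "eact p g ` E (vact p (zneg p g) x) \<subseteq> E x"
    proof
      fix \<sigma> assume "\<sigma> \<in> eact p g ` E (vact p (zneg p g) x)"
      then obtain \<tau> where t: "\<tau> \<in> edges p" "vact p (zneg p g) x \<in> \<tau>" "\<sigma> = eact p g \<tau>" by blast
      have "vact p g (vact p (zneg p g) x) \<in> eact p g \<tau>" by (rule eact_mem[OF pr t(2)])
      then show "\<sigma> \<in> E x" using t eact_edges[OF pr g] vact_neg[OF pr x] by simp
    qed
  next
    show "E x \<subseteq> eact p g ` E (vact p (zneg p g) x)"
    proof
      fix \<sigma> assume s: "\<sigma> \<in> E x"
      have "eact p (zneg p g) \<sigma> \<in> E (vact p (zneg p g) x)"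
        using s eact_edges[OF pr g'] eact_mem[OF pr] by blast
      moreover have "\<sigma> = eact p g (eact p (zneg p g) \<sigma>)" using s eact_neg[OF pr] by simp
      ultimately show "\<sigma> \<in> eact p g ` E (vact p (zneg p g) x)" by blast
    qed
  qed
  ultimately show ?thesis by (simp add: bij_betw_def)
qed

lemma chain_act_bdry: assumes g: "g \<in> zp p" and y: "y \<in> C1 p Fe"
  shows "chain_act p Av g (bdry p r y) = bdry p r (edge_act p Ae g y)"
proof
  fix x
  show "chain_act p Av g (bdry p r y) x = bdry p r (edge_act p Ae g y) x"
  proof (cases "x \<in> verts p")
    case False
    have e: "E x = {}" by (rule E_empty[OF False])
    show ?thesis unfolding bdry_app e using False by (simp add: chain_act_def)
  next
    case x: True
    define x' where "x' = vact p (zneg p g) x"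
    have x': "x' \<in> verts p" unfolding x'_def by (rule vact_verts[OF pr])
    have gx': "vact p g x' = x" unfolding x'_def by (rule vact_neg[OF pr x])
    have "chain_act p Av g (bdry p r y) x = Av g x' (\<Sum>\<tau> \<in> E x'. r \<tau> x' (y \<tau>))"
      using x by (simp add: chain_act_def bdry_app x'_def)
    also have "\<dots> = (\<Sum>\<tau> \<in> E x'. Av g x' (r \<tau> x' (y \<tau>)))"
      by (rule ad_sum[OF Fv_sg[OF x'] Av_ad[OF g x']]) (auto intro!: r_mem C1_mem[OF y])
    also have "\<dots> = (\<Sum>\<tau> \<in> E x'. r (eact p g \<tau>) x (Ae g \<tau> (y \<tau>)))"
      by (rule sum.cong) (auto simp: r_eq[OF g] C1_mem[OF y] gx'[symmetric])
    also have "\<dots> = (\<Sum>\<tau> \<in> E x'. (\<lambda>\<sigma>. r \<sigma> x (edge_act p Ae g y \<sigma>)) (eact p g \<tau>))"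
      by (rule sum.cong) (auto simp: edge_act_def eact_edges[OF pr g] eact_neg2[OF pr])
    also have "\<dots> = (\<Sum>\<sigma> \<in> E x. r \<sigma> x (edge_act p Ae g y \<sigma>))"
      by (rule sum.reindex_bij_betw) (use E_bij[OF g x] in \<open>simp add: x'_def\<close>)
    finally show ?thesis by (simp add: bdry_app)
  qed
qed

lemma fst_ed: "Min (fst ` ed p n b) = n" by (simp add: ed_def)

lemma depth: assumes y: "y \<in> C1 p Fe" and van: "\<forall>v \<in> verts p. fst v > N \<longrightarrow> bdry p r y v = 0"
  shows "\<forall>n b. N \<le> n \<longrightarrow> y (ed p n b) = 0"
proof (rule ccontr)
  assume "\<not> ?thesis"
  then obtain n0 b0 where nb0: "N \<le> n0" "y (ed p n0 b0) \<noteq> 0" by blast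
  define S where "S = {n. \<exists>b. y (ed p n b) \<noteq> 0}"
  have "S \<subseteq> (\<lambda>\<tau>. Min (fst ` \<tau>)) ` {\<tau>. y \<tau> \<noteq> 0}"
  proof
    fix n assume "n \<in> S"
    then obtain b where "y (ed p n b) \<noteq> 0" unfolding S_def by blast
    then show "n \<in> (\<lambda>\<tau>. Min (fst ` \<tau>)) ` {\<tau>. y \<tau> \<noteq> 0}" using fst_ed[of n b] by (metis (mono_tags) image_eqI mem_Collect_eq)
  qed
  then have finS: "finite S" using C1_fin[OF y] finite_surj by blast
  have n0S: "n0 \<in> S" using nb0 unfolding S_def by blast
  define M where "M = Max S"
  have M1: "n0 \<le> M" unfolding M_def by (rule Max_ge[OF finS n0S])
  have M2: "M \<in> S" unfolding M_def by (rule Max_in[OF finS]) (use n0S in blast)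
  note M = M1 M2
  have Mmax: "\<And>n b. M < n \<Longrightarrow> y (ed p n b) = 0"
    using finS unfolding M_def S_def by (metis (mono_tags, lifting) Max_ge leD mem_Collect_eq)
  obtain b where b: "y (ed p M b) \<noteq> 0" using M(2) unfolding S_def by blast
  have te: "ed p M b \<in> edges p" using b C1_out[OF y] by blast
  then obtain n' b' where nb': "0 \<le> b'" "b' < p ^ Suc n'" "ed p M b = ed p n' b'" using edges_ed[OF pr] by blast
  then have brange: "0 \<le> b" "b < p ^ Suc M" using ed_inj by blast+
  define v where "v = (Suc M, b)"
  have v: "v \<in> verts p" using brange by (simp add: verts_def v_def del: power_Suc)
  have vin: "v \<in> ed p M b" by (simp add: ed_def v_def)
  have other: "\<And>\<tau>. \<tau> \<in> E v - {ed p M b} \<Longrightarrow> r \<tau> v (y \<tau>) = 0"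
  proof -
    fix \<tau> assume t: "\<tau> \<in> E v - {ed p M b}"
    then obtain n b'' where tn: "\<tau> = ed p n b''" using edges_ed[OF pr] by blast
    have "v \<in> ed p n b''" using t tn by blast
    then have "(Suc M = n) \<or> (Suc M = Suc n \<and> b = b'')" by (auto simp: ed_def v_def)
    then have "Suc M = n" using t tn by auto
    then show "r \<tau> v (y \<tau>) = 0" using Mmax[of n b''] tn r_0 t by auto
  qed
  have "bdry p r y v = (\<Sum>\<tau> \<in> E v. r \<tau> v (y \<tau>))" by (rule bdry_app)
  also have "\<dots> = r (ed p M b) v (y (ed p M b)) + (\<Sum>\<tau> \<in> E v - {ed p M b}. r \<tau> v (y \<tau>))"
    using te vin finite_edges_at[OF pr, of v] by (simp add: sum.remove)
  also have "(\<Sum>\<tau> \<in> E v - {ed p M b}. r \<tau> v (y \<tau>)) = 0" using other by simp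
  finally have bv: "bdry p r y v = r (ed p M b) v (y (ed p M b))" by simp
  have "r (ed p M b) v (y (ed p M b)) \<noteq> 0"
  proof
    assume "r (ed p M b) v (y (ed p M b)) = 0"
    then have "r (ed p M b) v (y (ed p M b)) = r (ed p M b) v 0" using r_0[OF te vin] by simp
    then have "y (ed p M b) = 0"
      using rinj te vin C1_mem[OF y te] sg_zero[OF Fe_sg[OF te]] by (meson inj_onD)
    then show False using b by simp
  qed
  moreover have "fst v > N" using M nb0 by (simp add: v_def)
  ultimately show False using van v bv by auto
qed

lemma bdry_inj0: assumes y: "y \<in> C1 p Fe" and "bdry p r y = 0" shows "y = 0"
proof
  fix \<tau>
  show "y \<tau> = 0 \<tau>"
  proof (cases "\<tau> \<in> edges p")
    case True
    then obtain n b where "\<tau> = ed p n b" using edges_ed[OF pr] by blast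
    moreover have "\<forall>n b. 0 \<le> n \<longrightarrow> y (ed p n b) = 0" by (rule depth[OF y]) (simp add: assms(2))
    ultimately show ?thesis by simp
  qed (simp add: C1_out[OF y])
qed

lemma bdry_inj: assumes "y \<in> C1 p Fe" "z \<in> C1 p Fe" "bdry p r y = bdry p r z" shows "y = z"
proof -
  have "bdry p r (y - z) = 0" using bdry_diff[OF assms(1,2)] assms(3) by simp
  then have "y - z = 0" using bdry_inj0 C1_diff[OF assms(1,2)] by blast
  then show ?thesis by simp
qed

end


lemma H1_kill:
  fixes Y :: "(nat \<Rightarrow> int) \<Rightarrow> 'm::ab_group_add" and f :: "'m \<Rightarrow> 'n::ab_group_add"
  assumes sM: "subgrp M" and sN: "subgrp N"
    and aM: "\<forall>g\<in>H. additive_on M (act g) M" and aN: "\<forall>g\<in>H. additive_on N (actN g) N"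
    and af: "additive_on M f N" and eqv: "\<forall>g\<in>H. \<forall>m\<in>M. f (act g m) = actN g (f m)"
    and inj: "inj_on (H1_map p H N actN f) (H1 p H M act)"
    and Y: "Y \<in> Z1 p H M act" and n0: "n0 \<in> N" and fY: "\<forall>g\<in>H. f (Y g) = actN g n0 - n0"
  shows "\<exists>m\<in>M. \<forall>g\<in>H. Y g = act g m - m"
proof -
  define rel where "rel = {(c, c'). c \<in> Z1 p H M act \<and> c' \<in> Z1 p H M act \<and> cohomologous H M act c c'}"
  have H1eq: "H1 p H M act = Z1 p H M act // rel" unfolding H1_def rel_def by simp
  have Z1M: "\<And>c g. c \<in> Z1 p H M act \<Longrightarrow> g \<in> H \<Longrightarrow> c g \<in> M" unfolding Z1_def by blast
  have act0: "\<And>g. g \<in> H \<Longrightarrow> act g 0 = 0" using ad_zero[OF sM] aM by blast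
  have refl: "\<And>c. c \<in> Z1 p H M act \<Longrightarrow> c \<in> rel `` {c}"
    unfolding rel_def cohomologous_def using sg_zero[OF sM] act0 by fastforce
  define S where "S = {c' \<in> Z1 p H N actN. \<exists>n\<in>N. \<forall>g\<in>H. c' g = actN g n - n}"
  have L: "H1_map p H N actN f (rel `` {Y1}) = S"
    if Y1: "Y1 \<in> Z1 p H M act" and n1: "n1 \<in> N" and fY1: "\<forall>g\<in>H. f (Y1 g) = actN g n1 - n1" for Y1 n1
  proof
    show "H1_map p H N actN f (rel `` {Y1}) \<subseteq> S"
    proof
      fix c' assume "c' \<in> H1_map p H N actN f (rel `` {Y1})"
      then obtain Y' where c': "c' \<in> Z1 p H N actN" and Y': "Y' \<in> rel `` {Y1}"
        and coh: "cohomologous H N actN (f \<circ> Y') c'" unfolding H1_map_def by blast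
      from Y' obtain m where m: "m \<in> M" "\<forall>g\<in>H. Y1 g - Y' g = act g m - m" and Y'Z: "Y' \<in> Z1 p H M act"
        unfolding rel_def cohomologous_def by blast
      from coh obtain n2 where n2: "n2 \<in> N" "\<forall>g\<in>H. f (Y' g) - c' g = actN g n2 - n2"
        unfolding cohomologous_def by auto
      define n where "n = n1 - f m - n2"
      have nN: "n \<in> N" unfolding n_def using sg_diff[OF sN] n1 n2(1) ad_mem[OF af m(1)] by blast
      have "\<forall>g\<in>H. c' g = actN g n - n"
      proof
        fix g assume g: "g \<in> H"
        have "f (Y1 g - Y' g) = f (Y1 g) - f (Y' g)" by (rule ad_diff[OF sM af Z1M[OF Y1 g] Z1M[OF Y'Z g]])
        also have "Y1 g - Y' g = act g m - m" using m g by blast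
        also have "f (act g m - m) = actN g (f m) - f m"
        proof -
          have am: "additive_on M (act g) M" using aM g by blast
          have "f (act g m - m) = f (act g m) - f m" by (rule ad_diff[OF sM af ad_mem[OF am m(1)] m(1)])
          then show ?thesis using eqv g m(1) by simp
        qed
        finally have e1: "f (Y' g) = f (Y1 g) - (actN g (f m) - f m)" by (simp add: algebra_simps)
        have e2: "actN g n = actN g n1 - actN g (f m) - actN g n2"
        proof -
          have an: "additive_on N (actN g) N" using aN g by blast
          have fm: "f m \<in> N" by (rule ad_mem[OF af m(1)])
          have "actN g n = actN g (n1 - f m) - actN g n2"
            unfolding n_def by (rule ad_diff[OF sN an sg_diff[OF sN n1 fm] n2(1)])
          also have "actN g (n1 - f m) = actN g n1 - actN g (f m)" by (rule ad_diff[OF sN an n1 fm])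
          finally show ?thesis .
        qed
        have "c' g = f (Y' g) - (actN g n2 - n2)" using n2(2) g by (simp add: algebra_simps)
        also have "\<dots> = actN g n1 - n1 - (actN g (f m) - f m) - (actN g n2 - n2)" using e1 fY1 g by simp
        also have "\<dots> = (actN g n1 - actN g (f m) - actN g n2) - (n1 - f m - n2)" by (simp add: algebra_simps)
        finally have X: "c' g = (actN g n1 - actN g (f m) - actN g n2) - n" unfolding n_def .
        show "c' g = actN g n - n" unfolding e2 by (rule X)
      qed
      then show "c' \<in> S" unfolding S_def using c' nN by blast
    qed
  next
    show "S \<subseteq> H1_map p H N actN f (rel `` {Y1})"
    proof
      fix c' assume "c' \<in> S"
      then obtain n where c': "c' \<in> Z1 p H N actN" and n: "n \<in> N" "\<forall>g\<in>H. c' g = actN g n - n"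
        unfolding S_def by blast
      have "cohomologous H N actN (f \<circ> Y1) c'"
        unfolding cohomologous_def
      proof (intro bexI ballI)
        show "n1 - n \<in> N" using sg_diff[OF sN n1 n(1)] .
        fix g assume g: "g \<in> H"
        have h: "actN g (n1 - n) = actN g n1 - actN g n" using ad_diff[OF sN _ n1 n(1)] aN g by blast
        have a: "f (Y1 g) = actN g n1 - n1" using fY1 g by blast
        have b: "c' g = actN g n - n" using n(2) g by blast
        show "(f \<circ> Y1) g - c' g = actN g (n1 - n) - (n1 - n)" unfolding comp_apply a b h by (simp add: algebra_simps)
      qed
      then show "c' \<in> H1_map p H N actN f (rel `` {Y1})" unfolding H1_map_def using c' refl[OF Y1] by blast
    qed
  qed
  define z0 where "z0 = (\<lambda>g::nat \<Rightarrow> int. 0::'m)"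
  have z0Z: "z0 \<in> Z1 p H M act" unfolding Z1_def z0_def using sg_zero[OF sM] act0 by auto
  have fz0: "\<forall>g\<in>H. f (z0 g) = actN g 0 - 0"
    using ad_zero[OF sM af] ad_zero[OF sN] aN by (auto simp: z0_def)
  have "H1_map p H N actN f (rel `` {Y}) = H1_map p H N actN f (rel `` {z0})"
    using L[OF Y n0 fY] L[OF z0Z sg_zero[OF sN] fz0] by simp
  moreover have "rel `` {Y} \<in> H1 p H M act" unfolding H1eq using Y by (rule quotientI)
  moreover have "rel `` {z0} \<in> H1 p H M act" unfolding H1eq using z0Z by (rule quotientI)
  ultimately have "rel `` {Y} = rel `` {z0}" using inj by (meson inj_onD)
  then have "Y \<in> rel `` {z0}" using refl[OF Y] by simp
  then obtain m where m: "m \<in> M" "\<forall>g\<in>H. z0 g - Y g = act g m - m"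
    unfolding rel_def cohomologous_def by blast
  show ?thesis
  proof (intro bexI ballI)
    show "- m \<in> M" using sg_neg[OF sM m(1)] .
    fix g assume g: "g \<in> H"
    have "act g (- m) = - act g m" using ad_neg[OF sM _ m(1)] aM g by blast
    then show "Y g = act g (- m) - - m" using m(2) g by (simp add: z0_def algebra_simps)
  qed
qed

context CS begin

declare split_paired_All[simp del] split_paired_Ex[simp del]

definition inv_c :: "(vertex \<Rightarrow> 'a) \<Rightarrow> bool" where
  "inv_c c \<longleftrightarrow> (\<forall>g\<in>zp p. \<exists>y\<in>C1 p Fe. chain_act p Av g c = c + bdry p r y)"

definition Yc :: "(vertex \<Rightarrow> 'a) \<Rightarrow> (nat \<Rightarrow> int) \<Rightarrow> edge \<Rightarrow> 'a" where
  "Yc c g = (THE y. y \<in> C1 p Fe \<and> chain_act p Av g c = c + bdry p r y)"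

lemma Yc_eq: assumes "y \<in> C1 p Fe" "chain_act p Av g c = c + bdry p r y" shows "Yc c g = y"
  unfolding Yc_def
proof (rule the_equality)
  show "y \<in> C1 p Fe \<and> chain_act p Av g c = c + bdry p r y" using assms by blast
  fix y' assume "y' \<in> C1 p Fe \<and> chain_act p Av g c = c + bdry p r y'"
  then show "y' = y" using bdry_inj assms by (metis add_left_cancel)
qed

lemma Yc_prop: assumes "inv_c c" "g \<in> zp p"
  shows "Yc c g \<in> C1 p Fe" "chain_act p Av g c = c + bdry p r (Yc c g)"
proof -
  obtain y where "y \<in> C1 p Fe" "chain_act p Av g c = c + bdry p r y" using assms unfolding inv_c_def by blast
  then show "Yc c g \<in> C1 p Fe" "chain_act p Av g c = c + bdry p r (Yc c g)" using Yc_eq by auto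
qed

lemma Yc_cocycle: assumes c: "c \<in> C0 p Fv" "inv_c c" and g: "g \<in> zp p" and h: "h \<in> zp p"
  shows "Yc c (zadd p g h) = Yc c g + edge_act p Ae g (Yc c h)"
proof (rule Yc_eq)
  note Yg = Yc_prop[OF c(2) g] and Yh = Yc_prop[OF c(2) h]
  show "Yc c g + edge_act p Ae g (Yc c h) \<in> C1 p Fe" using C1_add Yg(1) edge_act_C1[OF g Yh(1)] by blast
  have "chain_act p Av (zadd p g h) c = chain_act p Av g (chain_act p Av h c)" by (rule chain_act_comp[OF g h c(1)])
  also have "\<dots> = chain_act p Av g (c + bdry p r (Yc c h))" using Yh(2) by simp
  also have "\<dots> = chain_act p Av g c + chain_act p Av g (bdry p r (Yc c h))"
    by (rule chain_act_add[OF g c(1) bdry_C0[OF Yh(1)]])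
  also have "\<dots> = c + bdry p r (Yc c g) + bdry p r (edge_act p Ae g (Yc c h))"
    using Yg(2) chain_act_bdry[OF g Yh(1)] by simp
  also have "\<dots> = c + bdry p r (Yc c g + edge_act p Ae g (Yc c h))"
    using bdry_add[OF Yg(1) edge_act_C1[OF g Yh(1)]] by (simp add: add.assoc)
  finally show "chain_act p Av (zadd p g h) c = c + bdry p r (Yc c g + edge_act p Ae g (Yc c h))" .
qed

lemma zneg_zero_at: "g n = 0 \<Longrightarrow> zneg p g n = 0" by (simp add: zneg_def)

lemma c_smooth: assumes c: "c \<in> C0 p Fv"
  shows "\<exists>K. \<forall>g\<in>zp p. g K = 0 \<longrightarrow> chain_act p Av g c = c"
proof -
  define S where "S = {x. c x \<noteq> 0}"
  have finS: "finite S" unfolding S_def by (rule C0_fin[OF c])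
  have Sv: "\<And>x. x \<in> S \<Longrightarrow> x \<in> verts p" unfolding S_def using C0_out[OF c] by blast
  have "\<forall>x\<in>S. \<exists>k. \<forall>g\<in>zp p. g k = 0 \<longrightarrow> Av g x (c x) = c x"
    using sm Sv C0_mem[OF c] unfolding smooth_sys_def by blast
  then obtain kf where kf: "\<forall>x\<in>S. \<forall>g\<in>zp p. g (kf x) = 0 \<longrightarrow> Av g x (c x) = c x" by metis
  define K where "K = Max (insert 0 ((\<lambda>x. max (fst x) (kf x)) ` S))"
  have Kge: "\<And>x. x \<in> S \<Longrightarrow> fst x \<le> K \<and> kf x \<le> K"
  proof -
    fix x assume "x \<in> S"
    then have "max (fst x) (kf x) \<le> K" unfolding K_def using finS by (intro Max_ge) auto
    then show "fst x \<le> K \<and> kf x \<le> K" by simp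
  qed
  show ?thesis
  proof (intro exI ballI impI)
    fix g assume g: "g \<in> zp p" and gK: "g K = 0"
    have fixS: "\<And>x. x \<in> S \<Longrightarrow> vact p (zneg p g) x = x"
    proof -
      fix x assume x: "x \<in> S"
      have "g (fst x) = 0" using zp_zero_below[OF g gK] Kge[OF x] by blast
      then show "vact p (zneg p g) x = x" using vact_fix[OF pr Sv[OF x]] zneg_zero_at by blast
    qed
    show "chain_act p Av g c = c"
    proof
      fix x
      show "chain_act p Av g c x = c x"
      proof (cases "x \<in> verts p")
        case False then show ?thesis using C0_out[OF c False] by (simp add: chain_act_def)
      next
        case True
        define x' where "x' = vact p (zneg p g) x"
        have x': "x' \<in> verts p" unfolding x'_def by (rule vact_verts[OF pr])
        have ca: "chain_act p Av g c x = Av g x' (c x')" using True by (simp add: chain_act_def x'_def)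
        show ?thesis
        proof (cases "x' \<in> S")
          case True
          have "vact p (zneg p g) x' = x'" using fixS[OF True] .
          then have "x = x'" using vact_neg2[OF pr \<open>x \<in> verts p\<close>, of "zneg p g"] x'_def
            by (metis vact_neg[OF pr \<open>x \<in> verts p\<close>] vact_neg2[OF pr x'])
          moreover have "g (kf x') = 0" using zp_zero_below[OF g gK] Kge[OF True] by blast
          ultimately show ?thesis using ca kf True g by simp
        next
          case False
          then have "c x' = 0" unfolding S_def by simp
          then have l: "chain_act p Av g c x = 0" using ca Av_0[OF g x'] by simp
          have "c x = 0"
          proof (rule ccontr)
            assume "c x \<noteq> 0" then have xS: "x \<in> S" unfolding S_def by simp
            then have "x' = x" using fixS x'_def by simp
            then show False using False xS by simp
          qed
          then show ?thesis using l by simp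
        qed
      qed
    qed
  qed
qed

lemma Yc_smooth: assumes c: "c \<in> C0 p Fv" "inv_c c"
  shows "\<exists>K. \<forall>g\<in>zp p. \<forall>h\<in>zp p. g K = h K \<longrightarrow> Yc c g = Yc c h"
proof -
  obtain K where K: "\<forall>g\<in>zp p. g K = 0 \<longrightarrow> chain_act p Av g c = c" using c_smooth[OF c(1)] by blast
  have Y0: "\<And>g. g \<in> zp p \<Longrightarrow> g K = 0 \<Longrightarrow> Yc c g = 0"
    using K by (intro Yc_eq C1_zero) (simp add: bdry_zero)
  show ?thesis
  proof (intro exI ballI impI)
    fix g h assume g: "g \<in> zp p" and h: "h \<in> zp p" and e: "g K = h K"
    define d where "d = zadd p h (zneg p g)"
    have d: "d \<in> zp p" unfolding d_def by (rule zadd_zp'[OF h zneg_zp'[OF g]])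
    have "d K = (h K + (- g K) mod p ^ K) mod p ^ K" by (simp add: d_def zadd_def zneg_def)
    also have "\<dots> = (h K + - g K) mod p ^ K" by (rule mod_add_right_eq)
    also have "\<dots> = 0" using e by simp
    finally have dK: "d K = 0" .
    have "zadd p g d = zadd p (zadd p g h) (zneg p g)" unfolding d_def by (rule zadd_assoc[OF pr, symmetric])
    also have "\<dots> = zadd p (zadd p h g) (zneg p g)" by (simp only: zadd_comm[OF pr, of g h])
    also have "\<dots> = zadd p h (zadd p g (zneg p g))" by (rule zadd_assoc[OF pr])
    also have "\<dots> = h" by (simp only: zadd_neg[OF pr] zadd_zero[OF pr h])
    finally have "zadd p g d = h" .
    then have "Yc c h = Yc c g + edge_act p Ae g (Yc c d)" using Yc_cocycle[OF c g d] by simp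
    then show "Yc c g = Yc c h" using Y0[OF d dK] edge_act_zero[OF g] by simp
  qed
qed

end


context CS begin

declare split_paired_All[simp del] split_paired_Ex[simp del]

lemma p1: "p > 1" using p_facts[OF pr] by simp
lemma pp: "p ^ n > 0" using ppos[OF pr] .

lemma stab_iff: assumes "(k, a) \<in> verts p" shows "g \<in> stab p (k, a) \<longleftrightarrow> g \<in> zp p \<and> g k = 0"
  using vact_fix_iff[OF pr assms, of g] unfolding stab_def by auto

lemma ed_mem_low: "(k, a) \<in> ed p k b \<longleftrightarrow> b mod p ^ k = a" by (auto simp: ed_def)

definition g0 :: "nat \<Rightarrow> nat \<Rightarrow> int" where "g0 k = (\<lambda>n. p ^ k mod p ^ n)"

lemma g0_zp: "g0 k \<in> zp p"
proof -
  have "\<And>n. p ^ k mod p ^ n = (p ^ k mod p ^ Suc n) mod p ^ n"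
    by (rule mod_mod_cancel[symmetric]) (simp add: le_imp_power_dvd)
  then show ?thesis unfolding zp_def g0_def mem_Collect_eq using pp by auto
qed

lemma g0_k: "g0 k k = 0" by (simp add: g0_def)

lemma g0_moves: assumes "0 \<le> b" "b < p ^ Suc k" shows "eact p (g0 k) (ed p k b) \<noteq> ed p k b"
proof
  assume h: "eact p (g0 k) (ed p k b) = ed p k b"
  have "p ^ k < p ^ Suc k" using p1 pp[of k] by simp
  then have "g0 k (Suc k) = p ^ k" unfolding g0_def using pp[of k] by (simp add: mod_pos_pos_trivial del: power_Suc)
  then have "ed p k ((b + p ^ k) mod p ^ Suc k) = ed p k b" using h eact_ed[OF pr g0_zp] by (simp del: power_Suc)
  then have "(b + p ^ k) mod p ^ Suc k = b" using ed_inj by blast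
  then have "(b + p ^ k) mod p ^ Suc k = b mod p ^ Suc k" using assms by (simp add: mod_pos_pos_trivial del: power_Suc)
  then have "p ^ Suc k dvd (b + p ^ k) - b" by (rule mod_eq_dvd_iff[THEN iffD1])
  then have "p ^ Suc k dvd p ^ k" by simp
  then have "p ^ Suc k \<le> p ^ k" using pp[of k] by (rule zdvd_imp_le)
  then show False using p1 pp[of k] by simp
qed

lemma Theta_iff: assumes x: "(k, a) \<in> verts p"
  shows "\<tau> \<in> Theta p (k, a) \<longleftrightarrow> (\<exists>b. 0 \<le> b \<and> b < p ^ Suc k \<and> b mod p ^ k = a \<and> \<tau> = ed p k b)"
proof
  assume t: "\<tau> \<in> Theta p (k, a)"
  then have te: "\<tau> \<in> edges p" and xt: "(k, a) \<in> \<tau>" and mv: "\<exists>g \<in> stab p (k, a). eact p g \<tau> \<noteq> \<tau>"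
    unfolding Theta_def by auto
  obtain n b where nb: "0 \<le> b" "b < p ^ Suc n" "\<tau> = ed p n b" using te edges_ed[OF pr] by blast
  from xt nb(3) have "(n = k \<and> b mod p ^ n = a) \<or> (k = Suc n \<and> b = a)" by (auto simp: ed_def)
  then show "\<exists>b. 0 \<le> b \<and> b < p ^ Suc k \<and> b mod p ^ k = a \<and> \<tau> = ed p k b"
  proof
    assume "n = k \<and> b mod p ^ n = a" then show ?thesis using nb by blast
  next
    assume kn: "k = Suc n \<and> b = a"
    obtain g where g: "g \<in> stab p (k, a)" "eact p g \<tau> \<noteq> \<tau>" using mv by blast
    have gz: "g \<in> zp p" "g k = 0" using g(1) stab_iff[OF x] by auto
    have "eact p g \<tau> = ed p n ((b + g (Suc n)) mod p ^ Suc n)" using nb(3) eact_ed[OF pr gz(1)] by simp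
    also have "(b + g (Suc n)) mod p ^ Suc n = b" using kn gz(2) nb by (simp add: mod_pos_pos_trivial del: power_Suc)
    finally show ?thesis using g(2) nb(3) by simp
  qed
next
  assume "\<exists>b. 0 \<le> b \<and> b < p ^ Suc k \<and> b mod p ^ k = a \<and> \<tau> = ed p k b"
  then obtain b where b: "0 \<le> b" "b < p ^ Suc k" "b mod p ^ k = a" "\<tau> = ed p k b" by blast
  have "\<tau> \<in> edges p" using ed_edge[OF pr b(1,2)] b(4) by simp
  moreover have "(k, a) \<in> \<tau>" using b(3,4) ed_mem_low by simp
  moreover have "g0 k \<in> stab p (k, a)" using stab_iff[OF x] g0_zp g0_k by simp
  moreover have "eact p (g0 k) \<tau> \<noteq> \<tau>" using g0_moves[OF b(1,2)] b(4) by simp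
  ultimately show "\<tau> \<in> Theta p (k, a)" unfolding Theta_def by blast
qed

lemma Theta_E: "\<tau> \<in> Theta p x \<Longrightarrow> \<tau> \<in> E x" unfolding Theta_def by blast

lemma Theta_fin: "finite (Theta p x)"
  using finite_subset[OF _ finite_edges_at[OF pr, of x]] Theta_E by blast

lemma Theta_act: assumes x: "(k, a) \<in> verts p" and g: "g \<in> zp p" "g k = 0" and t: "\<tau> \<in> Theta p (k, a)"
  shows "eact p g \<tau> \<in> Theta p (k, a)"
proof -
  obtain b where b: "0 \<le> b" "b < p ^ Suc k" "b mod p ^ k = a" "\<tau> = ed p k b" using t Theta_iff[OF x] by blast
  define b' where "b' = (b + g (Suc k)) mod p ^ Suc k"
  have e: "eact p g \<tau> = ed p k b'" unfolding b'_def using b(4) eact_ed[OF pr g(1)] by simp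
  have "b' mod p ^ k = (b + g (Suc k)) mod p ^ k" unfolding b'_def
    by (rule mod_mod_cancel) (simp add: le_imp_power_dvd del: power_Suc)
  also have "\<dots> = (b + g (Suc k) mod p ^ k) mod p ^ k" by (rule mod_add_right_eq[symmetric])
  also have "g (Suc k) mod p ^ k = 0" using zp_mod[OF g(1), of k "Suc k"] g(2) by simp
  finally have "b' mod p ^ k = a" using b(3) by simp
  moreover have "0 \<le> b'" "b' < p ^ Suc k" unfolding b'_def using pp[of "Suc k"] by (simp_all del: power_Suc)
  ultimately show ?thesis using e Theta_iff[OF x] by blast
qed

lemma Theta_act_neg: assumes x: "(k, a) \<in> verts p" and g: "g \<in> zp p" "g k = 0" and t: "\<tau> \<in> Theta p (k, a)"
  shows "eact p (zneg p g) \<tau> \<in> Theta p (k, a)"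
  using Theta_act[OF x zneg_zp'[OF g(1)] _ t] g(2) by (simp add: zneg_def)

lemma dsum_mem: "m \<in> dsum_Theta p Fe x \<Longrightarrow> \<tau> \<in> Theta p x \<Longrightarrow> m \<tau> \<in> Fe \<tau>"
  unfolding dsum_Theta_def by blast
lemma dsum_out: "m \<in> dsum_Theta p Fe x \<Longrightarrow> \<tau> \<notin> Theta p x \<Longrightarrow> m \<tau> = 0"
  unfolding dsum_Theta_def by blast

lemma Theta_edges: "\<tau> \<in> Theta p x \<Longrightarrow> \<tau> \<in> edges p" unfolding Theta_def by blast

lemma dsum_C1: assumes m: "m \<in> dsum_Theta p Fe x" shows "m \<in> C1 p Fe"
proof -
  have "{\<tau>. m \<tau> \<noteq> 0} \<subseteq> Theta p x" using dsum_out[OF m] by blast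
  then have "finite {\<tau>. m \<tau> \<noteq> 0}" using Theta_fin finite_subset by blast
  moreover have "\<forall>\<tau>\<in>edges p. m \<tau> \<in> Fe \<tau>"
    using dsum_mem[OF m] dsum_out[OF m] sg_zero[OF Fe_sg] by metis
  moreover have "\<forall>\<tau>. \<tau> \<notin> edges p \<longrightarrow> m \<tau> = 0" using dsum_out[OF m] Theta_edges by blast
  ultimately show ?thesis unfolding C1_def by blast
qed

lemma dsum_sg: "subgrp (dsum_Theta p Fe x)"
  unfolding subgrp_def dsum_Theta_def
  using sg_zero[OF Fe_sg] sg_add[OF Fe_sg] sg_neg[OF Fe_sg] Theta_edges by auto

lemma dsum_act_ad: assumes x: "(k, a) \<in> verts p" and g: "g \<in> stab p (k, a)"
  shows "additive_on (dsum_Theta p Fe (k, a)) (dsum_act p Ae (k, a) g) (dsum_Theta p Fe (k, a))"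
proof -
  have gz: "g \<in> zp p" "g k = 0" using g stab_iff[OF x] by auto
  have ng: "zneg p g \<in> zp p" using zneg_zp'[OF gz(1)] .
  show ?thesis unfolding additive_on_def
  proof (intro conjI ballI)
    fix m assume m: "m \<in> dsum_Theta p Fe (k, a)"
    show "dsum_act p Ae (k, a) g m \<in> dsum_Theta p Fe (k, a)"
      unfolding dsum_Theta_def
    proof (intro CollectI conjI ballI allI impI)
      fix \<tau> assume t: "\<tau> \<in> Theta p (k, a)"
      have s: "eact p (zneg p g) \<tau> \<in> Theta p (k, a)" by (rule Theta_act_neg[OF x gz t])
      have "Ae g (eact p (zneg p g) \<tau>) (m (eact p (zneg p g) \<tau>)) \<in> Fe (eact p g (eact p (zneg p g) \<tau>))"
        by (rule Ae_mem[OF gz(1) Theta_edges[OF s] dsum_mem[OF m s]])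
      then show "dsum_act p Ae (k, a) g m \<tau> \<in> Fe \<tau>"
        using t eact_neg[OF pr Theta_edges[OF t]] by (simp add: dsum_act_def)
    next
      fix \<tau> assume "\<tau> \<notin> Theta p (k, a)"
      then show "dsum_act p Ae (k, a) g m \<tau> = 0" by (simp add: dsum_act_def)
    qed
  next
    fix m n assume m: "m \<in> dsum_Theta p Fe (k, a)" and n: "n \<in> dsum_Theta p Fe (k, a)"
    show "dsum_act p Ae (k, a) g (m + n) = dsum_act p Ae (k, a) g m + dsum_act p Ae (k, a) g n"
    proof
      fix \<tau>
      show "dsum_act p Ae (k, a) g (m + n) \<tau> = (dsum_act p Ae (k, a) g m + dsum_act p Ae (k, a) g n) \<tau>"
      proof (cases "\<tau> \<in> Theta p (k, a)")
        case True
        have s: "eact p (zneg p g) \<tau> \<in> Theta p (k, a)" by (rule Theta_act_neg[OF x gz True])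
        show ?thesis using True ad_add[OF Ae_ad[OF gz(1) Theta_edges[OF s]] dsum_mem[OF m s] dsum_mem[OF n s]]
          by (simp add: dsum_act_def)
      qed (simp add: dsum_act_def)
    qed
  qed
qed

lemma Avw_ad: assumes x: "(k, a) \<in> verts p" and g: "g \<in> stab p (k, a)"
  shows "additive_on (Fv (k, a)) (Av g (k, a)) (Fv (k, a))"
proof -
  have gz: "g \<in> zp p" "vact p g (k, a) = (k, a)" using g unfolding stab_def by auto
  show ?thesis using Av_ad[OF gz(1) x] gz(2) by simp
qed

lemma sum_map_ad: assumes x: "x \<in> verts p"
  shows "additive_on (dsum_Theta p Fe x) (sum_map p r x) (Fv x)"
  unfolding additive_on_def
proof (intro conjI ballI)
  fix m assume m: "m \<in> dsum_Theta p Fe x"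
  show "sum_map p r x m \<in> Fv x" unfolding sum_map_def
    by (rule sg_sum[OF Fv_sg[OF x]]) (use Theta_edges Theta_E dsum_mem[OF m] r_mem in blast)
next
  fix m n assume m: "m \<in> dsum_Theta p Fe x" and n: "n \<in> dsum_Theta p Fe x"
  have h: "\<And>\<tau>. \<tau> \<in> Theta p x \<Longrightarrow> r \<tau> x ((m + n) \<tau>) = r \<tau> x (m \<tau>) + r \<tau> x (n \<tau>)"
    using ad_add[OF r_ad] dsum_mem[OF m] dsum_mem[OF n] Theta_edges Theta_E by simp
  show "sum_map p r x (m + n) = sum_map p r x m + sum_map p r x n"
    unfolding sum_map_def sum.distrib[symmetric] by (rule sum.cong[OF refl h])
qed

lemma sum_map_eqv: assumes x: "(k, a) \<in> verts p" and g: "g \<in> stab p (k, a)" and m: "m \<in> dsum_Theta p Fe (k, a)"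
  shows "sum_map p r (k, a) (dsum_act p Ae (k, a) g m) = Av g (k, a) (sum_map p r (k, a) m)"
proof -
  let ?x = "(k, a)"
  have gz: "g \<in> zp p" "g k = 0" using g stab_iff[OF x] by auto
  have gx: "vact p g ?x = ?x" using g unfolding stab_def by auto
  have bij: "bij_betw (eact p g) (Theta p ?x) (Theta p ?x)"
  proof -
    have "inj_on (eact p g) (Theta p ?x)" by (rule inj_onI) (use eact_inj[OF pr] Theta_edges in blast)
    moreover have "eact p g ` Theta p ?x = Theta p ?x"
    proof
      show "eact p g ` Theta p ?x \<subseteq> Theta p ?x" using Theta_act[OF x gz] by blast
      show "Theta p ?x \<subseteq> eact p g ` Theta p ?x"
      proof
        fix \<sigma> assume s: "\<sigma> \<in> Theta p ?x"
        have "eact p (zneg p g) \<sigma> \<in> Theta p ?x" by (rule Theta_act_neg[OF x gz s])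
        moreover have "\<sigma> = eact p g (eact p (zneg p g) \<sigma>)" using eact_neg[OF pr Theta_edges[OF s]] by simp
        ultimately show "\<sigma> \<in> eact p g ` Theta p ?x" by blast
      qed
    qed
    ultimately show ?thesis by (simp add: bij_betw_def)
  qed
  have "Av g ?x (sum_map p r ?x m) = (\<Sum>\<tau>\<in>Theta p ?x. Av g ?x (r \<tau> ?x (m \<tau>)))"
    unfolding sum_map_def
    by (rule ad_sum[OF Fv_sg[OF x] Av_ad[OF gz(1) x]]) (use Theta_edges Theta_E dsum_mem[OF m] r_mem in blast)
  also have "\<dots> = (\<Sum>\<tau>\<in>Theta p ?x. r (eact p g \<tau>) ?x (Ae g \<tau> (m \<tau>)))"
  proof (rule sum.cong[OF refl])
    fix \<tau> assume t: "\<tau> \<in> Theta p ?x"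
    have "r (eact p g \<tau>) (vact p g ?x) (Ae g \<tau> (m \<tau>)) = Av g ?x (r \<tau> ?x (m \<tau>))"
      by (rule r_eq[OF gz(1) Theta_edges[OF t] Theta_E[OF t, THEN CollectD, THEN conjunct2] dsum_mem[OF m t]])
    then show "Av g ?x (r \<tau> ?x (m \<tau>)) = r (eact p g \<tau>) ?x (Ae g \<tau> (m \<tau>))" using gx by simp
  qed
  also have "\<dots> = (\<Sum>\<tau>\<in>Theta p ?x. (\<lambda>\<sigma>. r \<sigma> ?x (dsum_act p Ae ?x g m \<sigma>)) (eact p g \<tau>))"
  proof (rule sum.cong[OF refl])
    fix \<tau> assume t: "\<tau> \<in> Theta p ?x"
    show "r (eact p g \<tau>) ?x (Ae g \<tau> (m \<tau>)) = (\<lambda>\<sigma>. r \<sigma> ?x (dsum_act p Ae ?x g m \<sigma>)) (eact p g \<tau>)"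
      using Theta_act[OF x gz t] eact_neg2[OF pr Theta_edges[OF t]] by (simp add: dsum_act_def)
  qed
  also have "\<dots> = (\<Sum>\<sigma>\<in>Theta p ?x. r \<sigma> ?x (dsum_act p Ae ?x g m \<sigma>))"
    by (rule sum.reindex_bij_betw[OF bij])
  finally show ?thesis unfolding sum_map_def by simp
qed

lemma edge_act_dsum: assumes x: "(k, a) \<in> verts p" and g: "g \<in> zp p" "g k = 0" and m: "m \<in> dsum_Theta p Fe (k, a)"
  shows "edge_act p Ae g m = dsum_act p Ae (k, a) g m"
proof
  fix \<tau>
  show "edge_act p Ae g m \<tau> = dsum_act p Ae (k, a) g m \<tau>"
  proof (cases "\<tau> \<in> Theta p (k, a)")
    case True
    then show ?thesis using Theta_edges[OF True] by (simp add: edge_act_def dsum_act_def)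
  next
    case False
    show ?thesis
    proof (cases "\<tau> \<in> edges p")
      case True
      have "eact p (zneg p g) \<tau> \<notin> Theta p (k, a)"
      proof
        assume "eact p (zneg p g) \<tau> \<in> Theta p (k, a)"
        then have "eact p g (eact p (zneg p g) \<tau>) \<in> Theta p (k, a)" by (rule Theta_act[OF x g])
        then show False using False eact_neg[OF pr True] by simp
      qed
      then have "m (eact p (zneg p g) \<tau>) = 0" using dsum_out[OF m] by blast
      then show ?thesis using False True Ae_0[OF g(1) eact_edges[OF pr zneg_zp'[OF g(1)] True]]
        by (simp add: edge_act_def dsum_act_def)
    qed (simp add: edge_act_def dsum_act_def False)
  qed
qed

end


context CS begin

declare split_paired_All[simp del] split_paired_Ex[simp del]

definition van :: "nat \<Rightarrow> (edge \<Rightarrow> 'a) \<Rightarrow> bool" where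
  "van k y \<longleftrightarrow> (\<forall>n b. n < k \<longrightarrow> y (ed p n b) = 0)"

definition inv_k :: "nat \<Rightarrow> (vertex \<Rightarrow> 'a) \<Rightarrow> bool" where
  "inv_k k c \<longleftrightarrow> (\<forall>g\<in>zp p. \<exists>y\<in>C1 p Fe. chain_act p Av g c = c + bdry p r y \<and> van k y)"

lemma inv_k_inv: "inv_k k c \<Longrightarrow> inv_c c" unfolding inv_k_def inv_c_def by blast

lemma inv_k_van: assumes "inv_k k c" "g \<in> zp p" shows "van k (Yc c g)"
proof -
  obtain y where "y \<in> C1 p Fe" "chain_act p Av g c = c + bdry p r y" "van k y"
    using assms unfolding inv_k_def by blast
  then show ?thesis using Yc_eq by simp
qed

lemma w0v: "(k, 0) \<in> verts p" using pp[of k] by (simp add: verts_def)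

definition Yw :: "(vertex \<Rightarrow> 'a) \<Rightarrow> nat \<Rightarrow> (nat \<Rightarrow> int) \<Rightarrow> edge \<Rightarrow> 'a" where
  "Yw c k g = (\<lambda>\<tau>. if \<tau> \<in> Theta p (k, 0) then Yc c g \<tau> else 0)"

lemma level_kill:
  assumes inj: "inj_on (H1_map p (stab p (k, 0)) (Fv (k, 0)) (\<lambda>g. Av g (k, 0)) (sum_map p r (k, 0)))
           (H1 p (stab p (k, 0)) (dsum_Theta p Fe (k, 0)) (dsum_act p Ae (k, 0)))"
    and c: "c \<in> C0 p Fv" and ik: "inv_k k c"
  shows "\<exists>m\<in>dsum_Theta p Fe (k, 0). \<forall>g\<in>stab p (k, 0). Yw c k g = dsum_act p Ae (k, 0) g m - m"
proof -
  let ?w = "(k, 0::int)"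
  have w: "?w \<in> verts p" by (rule w0v)
  have ic: "inv_c c" by (rule inv_k_inv[OF ik])
  have stz: "\<And>g. g \<in> stab p ?w \<Longrightarrow> g \<in> zp p \<and> g k = 0" using stab_iff[OF w] by blast
  have Ywd: "\<And>g. g \<in> zp p \<Longrightarrow> Yw c k g \<in> dsum_Theta p Fe ?w"
    unfolding Yw_def dsum_Theta_def using C1_mem[OF Yc_prop(1)[OF ic]] Theta_edges by auto
  have YZ: "Yw c k \<in> Z1 p (stab p ?w) (dsum_Theta p Fe ?w) (dsum_act p Ae ?w)"
    unfolding Z1_def
  proof (intro CollectI conjI ballI)
    fix g assume "g \<in> stab p ?w" then show "Yw c k g \<in> dsum_Theta p Fe ?w" using Ywd stz by blast
  next
    fix g h assume g: "g \<in> stab p ?w" and h: "h \<in> stab p ?w"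
    have gz: "g \<in> zp p" "g k = 0" and hz: "h \<in> zp p" using stz g h by auto
    show "Yw c k (zadd p g h) = Yw c k g + dsum_act p Ae ?w g (Yw c k h)"
    proof
      fix \<tau>
      show "Yw c k (zadd p g h) \<tau> = (Yw c k g + dsum_act p Ae ?w g (Yw c k h)) \<tau>"
      proof (cases "\<tau> \<in> Theta p ?w")
        case True
        have s: "eact p (zneg p g) \<tau> \<in> Theta p ?w" by (rule Theta_act_neg[OF w gz True])
        have "Yc c (zadd p g h) \<tau> = Yc c g \<tau> + edge_act p Ae g (Yc c h) \<tau>"
          using Yc_cocycle[OF c ic gz(1) hz] by simp
        then show ?thesis using True s Theta_edges[OF True]
          by (simp add: Yw_def dsum_act_def edge_act_def)
      qed (simp add: Yw_def dsum_act_def)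
    qed
  next
    obtain K where K: "\<forall>g\<in>zp p. \<forall>h\<in>zp p. g K = h K \<longrightarrow> Yc c g = Yc c h" using Yc_smooth[OF c ic] by blast
    show "\<exists>K. \<forall>g\<in>stab p ?w. \<forall>h\<in>stab p ?w. g K = h K \<longrightarrow> Yw c k g = Yw c k h"
      using K stz unfolding Yw_def by metis
  qed
  have fY: "\<forall>g\<in>stab p ?w. sum_map p r ?w (Yw c k g) = Av g ?w (c ?w) - c ?w"
  proof
    fix g assume g: "g \<in> stab p ?w"
    have gz: "g \<in> zp p" "g k = 0" using stz g by auto
    have ca: "chain_act p Av g c ?w = Av g ?w (c ?w)"
    proof -
      have "vact p (zneg p g) ?w = ?w" by (rule vact_fix[OF pr w]) (simp add: zneg_def gz(2))
      then show ?thesis using w by (simp add: chain_act_def)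
    qed
    have "chain_act p Av g c ?w = c ?w + bdry p r (Yc c g) ?w" using Yc_prop(2)[OF ic gz(1)] by simp
    then have e1: "Av g ?w (c ?w) - c ?w = (\<Sum>\<tau>\<in>E ?w. r \<tau> ?w (Yc c g \<tau>))" using ca by (simp add: bdry_app)
    have vg: "van k (Yc c g)" by (rule inv_k_van[OF ik gz(1)])
    have "(\<Sum>\<tau>\<in>E ?w. r \<tau> ?w (Yc c g \<tau>)) = (\<Sum>\<tau>\<in>Theta p ?w. r \<tau> ?w (Yc c g \<tau>))"
    proof (rule sum.mono_neutral_right)
      show "finite (E ?w)" by (rule finite_edges_at[OF pr])
      show "Theta p ?w \<subseteq> E ?w" using Theta_E by blast
      show "\<forall>\<tau>\<in>E ?w - Theta p ?w. r \<tau> ?w (Yc c g \<tau>) = 0"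
      proof
        fix \<tau> assume t: "\<tau> \<in> E ?w - Theta p ?w"
        then obtain n b where nb: "0 \<le> b" "b < p ^ Suc n" "\<tau> = ed p n b" using edges_ed[OF pr] by blast
        have "?w \<in> ed p n b" using t nb by blast
        then have "?w = (n, b mod p ^ n) \<or> ?w = (Suc n, b)" unfolding ed_def by blast
        then have "(k = n \<and> 0 = b mod p ^ n) \<or> (k = Suc n \<and> 0 = b)" by (simp only: prod.inject)
        then have "(n = k \<and> b mod p ^ n = 0) \<or> (k = Suc n)" by argo
        then have "n < k"
        proof
          assume h: "n = k \<and> b mod p ^ n = 0"
          hence nk: "n = k" and bm: "b mod p ^ n = 0" by blast+
          have ex: "\<exists>b'. 0 \<le> b' \<and> b' < p ^ Suc k \<and> b' mod p ^ k = 0 \<and> \<tau> = ed p k b'"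
            apply (rule exI[of _ b]) using nb(1) nb(2)[unfolded nk] bm[unfolded nk] nb(3)[unfolded nk] by blast
          have "\<tau> \<in> Theta p ?w" by (rule iffD2[OF Theta_iff[OF w] ex])
          then show "n < k" using t by blast
        qed simp
        then have "Yc c g \<tau> = 0" using vg nb unfolding van_def by blast
        moreover have "r \<tau> ?w 0 = 0" using r_0[of \<tau> ?w] t by blast
        ultimately show "r \<tau> ?w (Yc c g \<tau>) = 0" by simp
      qed
    qed
    also have "\<dots> = sum_map p r ?w (Yw c k g)" unfolding sum_map_def Yw_def by simp
    finally show "sum_map p r ?w (Yw c k g) = Av g ?w (c ?w) - c ?w" using e1 by simp
  qed
  have a3: "\<forall>g\<in>stab p ?w. additive_on (dsum_Theta p Fe ?w) (dsum_act p Ae ?w g) (dsum_Theta p Fe ?w)"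
    using dsum_act_ad[OF w] by blast
  have a4: "\<forall>g\<in>stab p ?w. additive_on (Fv ?w) (Av g ?w) (Fv ?w)" using Avw_ad[OF w] by blast
  have a6: "\<forall>g\<in>stab p ?w. \<forall>m\<in>dsum_Theta p Fe ?w. sum_map p r ?w (dsum_act p Ae ?w g m) = Av g ?w (sum_map p r ?w m)"
    using sum_map_eqv[OF w] by blast
  have a1: "subgrp (dsum_Theta p Fe ?w)" by (rule dsum_sg)
  have a2: "subgrp (Fv ?w)" by (rule Fv_sg[OF w])
  have a5: "additive_on (dsum_Theta p Fe ?w) (sum_map p r ?w) (Fv ?w)" by (rule sum_map_ad[OF w])
  have n0: "c ?w \<in> Fv ?w" by (rule C0_mem[OF c w])
  note t1 = H1_kill[OF a1 a2 a3 a4]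
  note t2 = t1[OF a5 a6]
  note t3 = t2[OF inj]
  note t4 = t3[OF YZ]
  note t5 = t4[OF n0 fY]
  show ?thesis by (rule t5)
qed

definition tt :: "int \<Rightarrow> nat \<Rightarrow> int" where "tt b = (\<lambda>n. b mod p ^ n)"

lemma tt_zp: "tt b \<in> zp p"
proof -
  have "\<And>n. b mod p ^ n = (b mod p ^ Suc n) mod p ^ n"
    by (rule mod_mod_cancel[symmetric]) (simp add: le_imp_power_dvd)
  then show ?thesis unfolding zp_def tt_def mem_Collect_eq using pp by auto
qed

lemma vact_tt: "vact p (tt b) (k, 0) = (k, b mod p ^ k)" by (simp add: vact_def tt_def)

lemma fst_vact: "fst (vact p g x) = fst x" by (simp add: vact_def)

lemma lowmem: "(k, b mod p ^ k) \<in> ed p k b" by (simp add: ed_def)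

lemma low_unique: assumes "x \<in> ed p k b" "fst x = k" shows "x = (k, b mod p ^ k)"
proof -
  have "x = (k, b mod p ^ k) \<or> x = (Suc k, b)" using assms(1) unfolding ed_def by blast
  moreover have "x \<noteq> (Suc k, b)"
  proof
    assume "x = (Suc k, b)" then have "fst x = Suc k" by simp
    then show False using assms(2) by simp
  qed
  ultimately show ?thesis by blast
qed

lemma Ywd: assumes "inv_c c" "g \<in> zp p" shows "Yw c k g \<in> dsum_Theta p Fe (k, 0)"
  unfolding Yw_def dsum_Theta_def using C1_mem[OF Yc_prop(1)[OF assms]] Theta_edges by auto

lemma edge_range: "ed p k b \<in> edges p \<Longrightarrow> 0 \<le> b \<and> b < p ^ Suc k"
proof -
  assume "ed p k b \<in> edges p"
  then obtain n' b' where "0 \<le> b'" "b' < p ^ Suc n'" "ed p k b = ed p n' b'" using edges_ed[OF pr] by blast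
  then show ?thesis using ed_inj by blast
qed

lemma level_step:
  assumes inj: "inj_on (H1_map p (stab p (k, 0)) (Fv (k, 0)) (\<lambda>g. Av g (k, 0)) (sum_map p r (k, 0)))
           (H1 p (stab p (k, 0)) (dsum_Theta p Fe (k, 0)) (dsum_act p Ae (k, 0)))"
    and c: "c \<in> C0 p Fv" and ik: "inv_k k c"
  shows "\<exists>z\<in>C1 p Fe. (\<forall>\<tau>. z \<tau> \<noteq> 0 \<longrightarrow> (\<exists>b. \<tau> = ed p k b)) \<and>
           (\<forall>g\<in>zp p. van (Suc k) (Yc c g - (edge_act p Ae g z - z)))"
proof -
  let ?w = "(k, 0::int)"
  have w: "?w \<in> verts p" by (rule w0v)
  have ic: "inv_c c" by (rule inv_k_inv[OF ik])
  obtain m where m: "m \<in> dsum_Theta p Fe ?w" and mh: "\<forall>h\<in>stab p ?w. Yw c k h = dsum_act p Ae ?w h m - m"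
    using level_kill[OF inj c ik] by blast
  have mC: "m \<in> C1 p Fe" by (rule dsum_C1[OF m])
  define Y where "Y = Yc c"
  have YC: "\<And>g. g \<in> zp p \<Longrightarrow> Y g \<in> C1 p Fe" unfolding Y_def using Yc_prop(1)[OF ic] .
  define F where "F = (\<lambda>b \<tau>. edge_act p Ae (tt b) m \<tau> - Y (tt b) \<tau>)"
  define z where "z = (\<lambda>\<tau>. if \<tau> \<in> edges p \<and> (\<exists>b. \<tau> = ed p k b) then F (SOME b. \<tau> = ed p k b) \<tau> else 0)"
  have z_ed: "\<And>b. ed p k b \<in> edges p \<Longrightarrow> z (ed p k b) = F b (ed p k b)"
  proof -
    fix b assume "ed p k b \<in> edges p"
    moreover have "(SOME b'. ed p k b = ed p k b') = b"
      by (rule some_equality) (auto dest: ed_inj)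
    ultimately show "z (ed p k b) = F b (ed p k b)" unfolding z_def by auto
  qed
  have z_lev: "\<And>\<tau>. z \<tau> \<noteq> 0 \<Longrightarrow> \<tau> \<in> edges p \<and> (\<exists>b. \<tau> = ed p k b)"
    unfolding z_def by (auto split: if_splits)
  have FC: "\<And>b \<tau>. \<tau> \<in> edges p \<Longrightarrow> F b \<tau> \<in> Fe \<tau>"
    unfolding F_def using sg_diff[OF Fe_sg] C1_mem edge_act_C1[OF tt_zp mC] YC[OF tt_zp] by blast
  have zC: "z \<in> C1 p Fe"
  proof -
    have "{\<tau>. z \<tau> \<noteq> 0} \<subseteq> {\<tau> \<in> edges p. \<forall>y \<in> \<tau>. fst y \<le> Suc k}"
    proof
      fix \<tau> assume "\<tau> \<in> {\<tau>. z \<tau> \<noteq> 0}"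
      then obtain b where "\<tau> \<in> edges p" "\<tau> = ed p k b" using z_lev by blast
      then show "\<tau> \<in> {\<tau> \<in> edges p. \<forall>y \<in> \<tau>. fst y \<le> Suc k}" using ed_level[OF pr, of _ k b] by fastforce
    qed
    then have "finite {\<tau>. z \<tau> \<noteq> 0}" using finite_edges_upto[OF pr] finite_subset by blast
    moreover have "\<forall>\<tau>\<in>edges p. z \<tau> \<in> Fe \<tau>" unfolding z_def using FC sg_zero[OF Fe_sg] by auto
    moreover have "\<forall>\<tau>. \<tau> \<notin> edges p \<longrightarrow> z \<tau> = 0" unfolding z_def by auto
    ultimately show ?thesis unfolding C1_def by blast
  qed
  have main: "\<And>g b. g \<in> zp p \<Longrightarrow> ed p k b \<in> edges p \<Longrightarrow>
       edge_act p Ae g z (ed p k b) - z (ed p k b) = Y g (ed p k b)"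
  proof -
    fix g b assume g: "g \<in> zp p" and te: "ed p k b \<in> edges p"
    define \<tau> where "\<tau> = ed p k b"
    have t: "\<tau> \<in> edges p" using te \<tau>_def by simp
    have ng: "zneg p g \<in> zp p" by (rule zneg_zp'[OF g])
    define b' where "b' = (b + zneg p g (Suc k)) mod p ^ Suc k"
    define \<sigma> where "\<sigma> = eact p (zneg p g) \<tau>"
    have se: "\<sigma> = ed p k b'" unfolding \<sigma>_def \<tau>_def b'_def by (rule eact_ed[OF pr ng])
    have s: "\<sigma> \<in> edges p" unfolding \<sigma>_def by (rule eact_edges[OF pr ng t])
    have gs: "eact p g \<sigma> = \<tau>" unfolding \<sigma>_def by (rule eact_neg[OF pr t])
    define Tt where "Tt = tt b"
    define Ts where "Ts = tt b'"
    have Tt: "Tt \<in> zp p" and Ts: "Ts \<in> zp p" unfolding Tt_def Ts_def by (rule tt_zp)+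
    define h where "h = zadd p (zneg p Tt) (zadd p g Ts)"
    have gTs: "zadd p g Ts \<in> zp p" by (rule zadd_zp'[OF g Ts])
    have hz: "h \<in> zp p" unfolding h_def by (rule zadd_zp'[OF zneg_zp'[OF Tt] gTs])
    have hw: "vact p h ?w = ?w"
    proof -
      have "vact p h ?w = vact p (zneg p Tt) (vact p g (vact p Ts ?w))"
        unfolding h_def by (simp add: vact_add[OF pr])
      also have "vact p Ts ?w = (k, b' mod p ^ k)" unfolding Ts_def by (rule vact_tt)
      also have "vact p g (k, b' mod p ^ k) = (k, b mod p ^ k)"
      proof -
        have "vact p g (k, b' mod p ^ k) \<in> eact p g \<sigma>" using lowmem se eact_mem[OF pr] by metis
        then have "vact p g (k, b' mod p ^ k) \<in> ed p k b" using gs \<tau>_def by simp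
        moreover have "fst (vact p g (k, b' mod p ^ k)) = k" by (simp add: fst_vact)
        ultimately show ?thesis by (rule low_unique)
      qed
      also have "(k, b mod p ^ k) = vact p Tt ?w" unfolding Tt_def by (rule vact_tt[symmetric])
      also have "vact p (zneg p Tt) (vact p Tt ?w) = ?w" by (rule vact_neg2[OF pr w])
      finally show ?thesis .
    qed
    have hs: "h \<in> stab p ?w" unfolding stab_def using hz hw by simp
    have hk: "h k = 0" using hs stab_iff[OF w] by blast
    have eqh: "zadd p Tt h = zadd p g Ts"
    proof -
      have "zadd p Tt h = zadd p (zadd p Tt (zneg p Tt)) (zadd p g Ts)" unfolding h_def by (rule zadd_assoc[OF pr, symmetric])
      also have "\<dots> = zadd p (zadd p g Ts) zzero" by (simp only: zadd_neg[OF pr] zadd_comm[OF pr, of zzero])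
      also have "\<dots> = zadd p g Ts" by (rule zadd_zero[OF pr gTs])
      finally show ?thesis .
    qed
    define \<rho> where "\<rho> = eact p (zneg p Tt) \<tau>"
    have \<rho>Th: "\<rho> \<in> Theta p ?w"
    proof -
      have nT: "zneg p Tt \<in> zp p" by (rule zneg_zp'[OF Tt])
      have "\<rho> = ed p k ((b + zneg p Tt (Suc k)) mod p ^ Suc k)" unfolding \<rho>_def \<tau>_def by (rule eact_ed[OF pr nT])
      moreover have "?w \<in> \<rho>"
      proof -
        have "vact p (zneg p Tt) (k, b mod p ^ k) \<in> \<rho>" unfolding \<rho>_def \<tau>_def by (rule eact_mem[OF pr lowmem])
        moreover have "vact p (zneg p Tt) (k, b mod p ^ k) = ?w"
          using vact_neg2[OF pr w, of Tt] vact_tt[of b k] Tt_def by simp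
        ultimately show ?thesis by simp
      qed
      ultimately obtain bb where bb: "\<rho> = ed p k bb" "?w \<in> ed p k bb" by auto
      have bm: "bb mod p ^ k = 0" using bb(2) ed_mem_low by blast
      have br: "0 \<le> bb \<and> bb < p ^ Suc k"
      proof -
        have "\<rho> \<in> edges p" unfolding \<rho>_def by (rule eact_edges[OF pr nT t])
        then have "ed p k bb \<in> edges p" by (simp only: bb(1))
        then show ?thesis by (rule edge_range)
      qed
      have "0 \<le> bb \<and> bb < p ^ Suc k \<and> bb mod p ^ k = 0 \<and> \<rho> = ed p k bb"
        by (rule conjI[OF conjunct1[OF br] conjI[OF conjunct2[OF br] conjI[OF bm bb(1)]]])
      then have "\<exists>b. 0 \<le> b \<and> b < p ^ Suc k \<and> b mod p ^ k = 0 \<and> \<rho> = ed p k b" by (rule exI)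
      then show ?thesis by (rule iffD2[OF Theta_iff[OF w]])
    qed
    have Ywh: "Yw c k h \<in> dsum_Theta p Fe ?w" by (rule Ywd[OF ic hz])
    have YwC: "Yw c k h \<in> C1 p Fe" by (rule dsum_C1[OF Ywh])
    have A: "edge_act p Ae g z \<tau> = edge_act p Ae (zadd p g Ts) m \<tau> - edge_act p Ae g (Y Ts) \<tau>"
    proof -
      have "edge_act p Ae g z \<tau> = Ae g \<sigma> (z \<sigma>)" using t by (simp add: edge_act_def \<sigma>_def)
      also have "z \<sigma> = edge_act p Ae Ts m \<sigma> - Y Ts \<sigma>" using z_ed[of b'] se s by (simp add: F_def Ts_def)
      also have "Ae g \<sigma> (edge_act p Ae Ts m \<sigma> - Y Ts \<sigma>) = Ae g \<sigma> (edge_act p Ae Ts m \<sigma>) - Ae g \<sigma> (Y Ts \<sigma>)"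
        by (rule ad_diff[OF Fe_sg[OF s] Ae_ad[OF g s] C1_mem[OF edge_act_C1[OF Ts mC] s] C1_mem[OF YC[OF Ts] s]])
      also have "Ae g \<sigma> (edge_act p Ae Ts m \<sigma>) = edge_act p Ae g (edge_act p Ae Ts m) \<tau>"
        using t by (simp add: edge_act_def \<sigma>_def)
      also have "Ae g \<sigma> (Y Ts \<sigma>) = edge_act p Ae g (Y Ts) \<tau>"
        using t by (simp add: edge_act_def \<sigma>_def)
      also have "edge_act p Ae g (edge_act p Ae Ts m) = edge_act p Ae (zadd p g Ts) m"
        by (rule edge_act_comp[OF g Ts mC, symmetric])
      finally show ?thesis .
    qed
    have B: "edge_act p Ae (zadd p g Ts) m = edge_act p Ae Tt (Yw c k h) + edge_act p Ae Tt m"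
    proof -
      have "edge_act p Ae (zadd p g Ts) m = edge_act p Ae Tt (edge_act p Ae h m)"
        unfolding eqh[symmetric] by (rule edge_act_comp[OF Tt hz mC])
      also have "edge_act p Ae h m = dsum_act p Ae ?w h m" by (rule edge_act_dsum[OF w hz hk m])
      also have "\<dots> = Yw c k h + m" using mh hs by simp
      also have "edge_act p Ae Tt (Yw c k h + m) = edge_act p Ae Tt (Yw c k h) + edge_act p Ae Tt m"
        by (rule edge_act_add[OF Tt YwC mC])
      finally show ?thesis .
    qed
    have C: "edge_act p Ae Tt (Yw c k h) \<tau> = edge_act p Ae Tt (Y h) \<tau>"
      using t \<rho>Th by (simp add: edge_act_def Yw_def Y_def \<rho>_def)
    have D1: "Y (zadd p Tt h) = Y Tt + edge_act p Ae Tt (Y h)" unfolding Y_def by (rule Yc_cocycle[OF c ic Tt hz])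
    have D2: "Y (zadd p g Ts) = Y g + edge_act p Ae g (Y Ts)" unfolding Y_def by (rule Yc_cocycle[OF c ic g Ts])
    have zt: "z \<tau> = edge_act p Ae Tt m \<tau> - Y Tt \<tau>" using z_ed[OF te] by (simp add: F_def Tt_def \<tau>_def)
    have "edge_act p Ae g z \<tau> - z \<tau> = edge_act p Ae Tt (Y h) \<tau> + Y Tt \<tau> - edge_act p Ae g (Y Ts) \<tau>"
      using A B C zt by simp
    also have "edge_act p Ae Tt (Y h) \<tau> + Y Tt \<tau> = Y (zadd p Tt h) \<tau>" using D1 by simp
    also have "Y (zadd p Tt h) \<tau> = Y g \<tau> + edge_act p Ae g (Y Ts) \<tau>" using D2 eqh by simp
    finally show "edge_act p Ae g z (ed p k b) - z (ed p k b) = Y g (ed p k b)" unfolding \<tau>_def by simp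
  qed
  show ?thesis
  proof (intro bexI conjI allI impI ballI)
    show "z \<in> C1 p Fe" by (rule zC)
    fix \<tau> assume "z \<tau> \<noteq> 0" then show "\<exists>b. \<tau> = ed p k b" using z_lev by blast
  next
    fix g assume g: "g \<in> zp p"
    have vY: "van k (Y g)" unfolding Y_def by (rule inv_k_van[OF ik g])
    show "van (Suc k) (Yc c g - (edge_act p Ae g z - z))" unfolding van_def
    proof (intro allI impI)
      fix n b assume n: "n < Suc k"
      show "(Yc c g - (edge_act p Ae g z - z)) (ed p n b) = 0"
      proof (cases "ed p n b \<in> edges p")
        case False
        then show ?thesis using C1_out[OF YC[OF g]] C1_out[OF zC] C1_out[OF edge_act_C1[OF g zC]]
          by (simp add: Y_def)
      next
        case True
        show ?thesis
        proof (cases "n = k")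
          case True
          then show ?thesis using main[OF g] \<open>ed p n b \<in> edges p\<close> by (simp add: Y_def)
        next
          case False
          then have nk: "n < k" using n by simp
          have zn: "\<And>b''. z (ed p n b'') = 0"
          proof (rule ccontr)
            fix b'' assume "z (ed p n b'') \<noteq> 0"
            then obtain b3 where "ed p n b'' = ed p k b3" using z_lev by blast
            then show False using ed_inj nk by blast
          qed
          have "edge_act p Ae g z (ed p n b) = 0"
          proof -
            have ng: "zneg p g \<in> zp p" by (rule zneg_zp'[OF g])
            have "eact p (zneg p g) (ed p n b) = ed p n ((b + zneg p g (Suc n)) mod p ^ Suc n)"
              by (rule eact_ed[OF pr ng])
            then show ?thesis using True zn Ae_0[OF g eact_edges[OF pr ng True]] by (simp add: edge_act_def)
          qed
          moreover have "Yc c g (ed p n b) = 0" using vY nk unfolding van_def Y_def by blast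
          ultimately show ?thesis using zn by simp
        qed
      qed
    qed
  qed
qed

end


context CS begin

declare split_paired_All[simp del] split_paired_Ex[simp del]

definition lev_le :: "nat \<Rightarrow> (vertex \<Rightarrow> 'a) \<Rightarrow> bool" where
  "lev_le N c \<longleftrightarrow> (\<forall>x. c x \<noteq> 0 \<longrightarrow> fst x \<le> N)"

lemma bdry_support: assumes "bdry p r z x \<noteq> 0" shows "\<exists>\<tau>. \<tau> \<in> edges p \<and> x \<in> \<tau> \<and> z \<tau> \<noteq> 0"
proof (rule ccontr)
  assume "\<not> ?thesis"
  then have "\<And>\<tau>. \<tau> \<in> E x \<Longrightarrow> r \<tau> x (z \<tau>) = 0" using r_0 by auto
  then have "bdry p r z x = 0" unfolding bdry_app by (rule sum.neutral[OF ballI]) simp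
  then show False using assms by simp
qed

lemma step_c:
  assumes inj: "inj_on (H1_map p (stab p (k, 0)) (Fv (k, 0)) (\<lambda>g. Av g (k, 0)) (sum_map p r (k, 0)))
           (H1 p (stab p (k, 0)) (dsum_Theta p Fe (k, 0)) (dsum_act p Ae (k, 0)))"
    and c: "c \<in> C0 p Fv" and lv: "lev_le N c" and kN: "k < N" and ik: "inv_k k c"
  shows "\<exists>z\<in>C1 p Fe. c - bdry p r z \<in> C0 p Fv \<and> lev_le N (c - bdry p r z) \<and> inv_k (Suc k) (c - bdry p r z)"
proof -
  obtain z where zC: "z \<in> C1 p Fe" and zl: "\<forall>\<tau>. z \<tau> \<noteq> 0 \<longrightarrow> (\<exists>b. \<tau> = ed p k b)"
    and zv: "\<forall>g\<in>zp p. van (Suc k) (Yc c g - (edge_act p Ae g z - z))"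
    using level_step[OF inj c ik] by blast
  have ic: "inv_c c" by (rule inv_k_inv[OF ik])
  define c' where "c' = c - bdry p r z"
  have c'C: "c' \<in> C0 p Fv" unfolding c'_def by (rule C0_diff[OF c bdry_C0[OF zC]])
  have lv': "lev_le N c'" unfolding lev_le_def
  proof (intro allI impI)
    fix x assume "c' x \<noteq> 0"
    then have "c x \<noteq> 0 \<or> bdry p r z x \<noteq> 0" unfolding c'_def by auto
    then show "fst x \<le> N"
    proof
      assume "c x \<noteq> 0" then show ?thesis using lv unfolding lev_le_def by blast
    next
      assume "bdry p r z x \<noteq> 0"
      then obtain \<tau> where "x \<in> \<tau>" "z \<tau> \<noteq> 0" using bdry_support by blast
      then obtain b where "x \<in> ed p k b" using zl by blast
      then have "fst x = k \<or> fst x = Suc k" by (rule ed_level[OF pr])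
      then show ?thesis using kN by auto
    qed
  qed
  have ik': "inv_k (Suc k) c'" unfolding inv_k_def
  proof
    fix g assume g: "g \<in> zp p"
    define y where "y = Yc c g - (edge_act p Ae g z - z)"
    have YC: "Yc c g \<in> C1 p Fe" by (rule Yc_prop(1)[OF ic g])
    have gzC: "edge_act p Ae g z \<in> C1 p Fe" by (rule edge_act_C1[OF g zC])
    have yC: "y \<in> C1 p Fe" unfolding y_def by (rule C1_diff[OF YC C1_diff[OF gzC zC]])
    have "chain_act p Av g c' = chain_act p Av g c - chain_act p Av g (bdry p r z)"
      unfolding c'_def by (rule chain_act_diff[OF g c bdry_C0[OF zC]])
    also have "\<dots> = (c + bdry p r (Yc c g)) - bdry p r (edge_act p Ae g z)"
      using Yc_prop(2)[OF ic g] chain_act_bdry[OF g zC] by simp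
    also have "\<dots> = c' + bdry p r y"
      unfolding c'_def y_def bdry_diff[OF YC C1_diff[OF gzC zC]] bdry_diff[OF gzC zC] by (simp add: algebra_simps)
    finally show "\<exists>y\<in>C1 p Fe. chain_act p Av g c' = c' + bdry p r y \<and> van (Suc k) y"
      using yC zv g unfolding y_def by blast
  qed
  show ?thesis using zC c'C lv' ik' unfolding c'_def by blast
qed

lemma base_case:
  assumes c: "c \<in> C0 p Fv" and lv: "lev_le N c" and ik: "inv_k N c"
  shows "c \<in> C0_inv p Fv Av"
proof -
  have "\<forall>g\<in>zp p. chain_act p Av g c = c"
  proof
    fix g assume g: "g \<in> zp p"
    obtain y where y: "y \<in> C1 p Fe" "chain_act p Av g c = c + bdry p r y" "van N y"
      using ik g unfolding inv_k_def by blast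
    have "\<forall>v\<in>verts p. fst v > N \<longrightarrow> bdry p r y v = 0"
    proof (intro ballI impI)
      fix v assume v: "v \<in> verts p" "fst v > N"
      have cv: "c v = 0" using lv v(2) unfolding lev_le_def by auto
      have "c (vact p (zneg p g) v) = 0" using lv v(2) fst_vact unfolding lev_le_def by (metis not_le)
      then have "chain_act p Av g c v = 0" using v(1) Av_0[OF g vact_verts[OF pr, of "zneg p g" v]]
        by (simp add: chain_act_def)
      then show "bdry p r y v = 0" using y(2) cv by (metis add_0 fun_cong plus_fun_apply)
    qed
    then have hi: "\<forall>n b. N \<le> n \<longrightarrow> y (ed p n b) = 0" by (rule depth[OF y(1)])
    have "y = 0"
    proof
      fix \<tau> show "y \<tau> = 0 \<tau>"
      proof (cases "\<tau> \<in> edges p")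
        case True
        then obtain n b where "\<tau> = ed p n b" using edges_ed[OF pr] by blast
        then show ?thesis using hi y(3) unfolding van_def by (cases "N \<le> n") auto
      qed (simp add: C1_out[OF y(1)])
    qed
    then show "chain_act p Av g c = c" using y(2) bdry_zero by simp
  qed
  then show ?thesis using c unfolding C0_inv_def by blast
qed

lemma main_ind:
  assumes inj: "\<forall>x \<in> verts p. inj_on
           (H1_map p (stab p x) (Fv x) (\<lambda>g. Av g x) (sum_map p r x))
           (H1 p (stab p x) (dsum_Theta p Fe x) (dsum_act p Ae x))"
  shows "\<forall>k c. N - k = d \<longrightarrow> k \<le> N \<longrightarrow> c \<in> C0 p Fv \<longrightarrow> lev_le N c \<longrightarrow> inv_k k c \<longrightarrow>
           (\<exists>z\<in>C1 p Fe. c - bdry p r z \<in> C0_inv p Fv Av)"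
proof (induction d)
  case 0
  show ?case
  proof (intro allI impI)
    fix k c assume "N - k = 0" "k \<le> N" and c: "c \<in> C0 p Fv" and lv: "lev_le N c" and ik: "inv_k k c"
    then have "k = N" by simp
    then have "c \<in> C0_inv p Fv Av" using base_case[OF c lv] ik by simp
    then show "\<exists>z\<in>C1 p Fe. c - bdry p r z \<in> C0_inv p Fv Av" using C1_zero bdry_zero by force
  qed
next
  case (Suc d)
  show ?case
  proof (intro allI impI)
    fix k c assume d: "N - k = Suc d" "k \<le> N" and c: "c \<in> C0 p Fv" and lv: "lev_le N c" and ik: "inv_k k c"
    have kN: "k < N" using d by simp
    have injk: "inj_on (H1_map p (stab p (k, 0)) (Fv (k, 0)) (\<lambda>g. Av g (k, 0)) (sum_map p r (k, 0)))
           (H1 p (stab p (k, 0)) (dsum_Theta p Fe (k, 0)) (dsum_act p Ae (k, 0)))"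
      using inj w0v by blast
    obtain z where z: "z \<in> C1 p Fe" "c - bdry p r z \<in> C0 p Fv" "lev_le N (c - bdry p r z)"
      "inv_k (Suc k) (c - bdry p r z)" using step_c[OF injk c lv kN ik] by blast
    have "N - Suc k = d" "Suc k \<le> N" using d by auto
    then obtain z' where z': "z' \<in> C1 p Fe" "(c - bdry p r z) - bdry p r z' \<in> C0_inv p Fv Av"
      using Suc.IH z by blast
    have e: "(c - bdry p r z) - bdry p r z' = c - bdry p r (z + z')"
      using bdry_add[OF z(1) z'(1)] by (simp add: algebra_simps)
    have "c - bdry p r (z + z') \<in> C0_inv p Fv Av" unfolding e[symmetric] by (rule z'(2))
    then show "\<exists>z\<in>C1 p Fe. c - bdry p r z \<in> C0_inv p Fv Av" using C1_add[OF z(1) z'(1)] by blast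
  qed
qed

lemma H0_class_eq: assumes "z \<in> C1 p Fe" shows "H0_class p Fv Fe r (c - bdry p r z) = H0_class p Fv Fe r c"
proof
  show "H0_class p Fv Fe r (c - bdry p r z) \<subseteq> H0_class p Fv Fe r c"
  proof
    fix u assume "u \<in> H0_class p Fv Fe r (c - bdry p r z)"
    then obtain y where y: "y \<in> C1 p Fe" "u = c - bdry p r z + bdry p r y" unfolding H0_class_def by blast
    have "u = c + bdry p r (y - z)" unfolding bdry_diff[OF y(1) assms] y(2) by (simp add: algebra_simps)
    then show "u \<in> H0_class p Fv Fe r c" unfolding H0_class_def using C1_diff[OF y(1) assms] by blast
  qed
next
  show "H0_class p Fv Fe r c \<subseteq> H0_class p Fv Fe r (c - bdry p r z)"
  proof
    fix u assume "u \<in> H0_class p Fv Fe r c"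
    then obtain y where y: "y \<in> C1 p Fe" "u = c + bdry p r y" unfolding H0_class_def by blast
    have "u = c - bdry p r z + bdry p r (y + z)" unfolding bdry_add[OF y(1) assms] y(2) by (simp add: algebra_simps)
    then show "u \<in> H0_class p Fv Fe r (c - bdry p r z)" unfolding H0_class_def using C1_add[OF y(1) assms] by blast
  qed
qed

lemma final:
  assumes inj: "\<forall>x \<in> verts p. inj_on
           (H1_map p (stab p x) (Fv x) (\<lambda>g. Av g x) (sum_map p r x))
           (H1 p (stab p x) (dsum_Theta p Fe x) (dsum_act p Ae x))"
  shows "H0_class p Fv Fe r ` C0_inv p Fv Av = H0_inv p Fv Fe r Av"
proof
  show "H0_class p Fv Fe r ` C0_inv p Fv Av \<subseteq> H0_inv p Fv Fe r Av"
    unfolding H0_inv_def C0_inv_def by auto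
next
  show "H0_inv p Fv Fe r Av \<subseteq> H0_class p Fv Fe r ` C0_inv p Fv Av"
  proof
    fix X assume "X \<in> H0_inv p Fv Fe r Av"
    then obtain c where c: "c \<in> C0 p Fv" and X: "X = H0_class p Fv Fe r c"
      and ci: "\<forall>g\<in>zp p. H0_class p Fv Fe r (chain_act p Av g c) = H0_class p Fv Fe r c"
      unfolding H0_inv_def by blast
    have ik: "inv_k 0 c" unfolding inv_k_def
    proof
      fix g assume g: "g \<in> zp p"
      have "chain_act p Av g c = chain_act p Av g c + bdry p r 0" using bdry_zero by simp
      then have "chain_act p Av g c \<in> H0_class p Fv Fe r (chain_act p Av g c)"
        unfolding H0_class_def using C1_zero by blast
      then have "chain_act p Av g c \<in> H0_class p Fv Fe r c" using ci g by simp
      then obtain y where "y \<in> C1 p Fe" "chain_act p Av g c = c + bdry p r y" unfolding H0_class_def by blast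
      then show "\<exists>y\<in>C1 p Fe. chain_act p Av g c = c + bdry p r y \<and> van 0 y" unfolding van_def by blast
    qed
    define N where "N = Max (insert 0 (fst ` {x. c x \<noteq> 0}))"
    have lv: "lev_le N c" unfolding lev_le_def N_def
    proof (intro allI impI)
      fix x assume "c x \<noteq> 0"
      then show "fst x \<le> Max (insert 0 (fst ` {x. c x \<noteq> 0}))" using C0_fin[OF c] by (intro Max_ge) auto
    qed
    obtain z where z: "z \<in> C1 p Fe" "c - bdry p r z \<in> C0_inv p Fv Av"
      using main_ind[OF inj, of N "N - 0"] c lv ik by blast
    have "X = H0_class p Fv Fe r (c - bdry p r z)" using X H0_class_eq[OF z(1)] by simp
    then show "X \<in> H0_class p Fv Fe r ` C0_inv p Fv Av" using z(2) by blast
  qed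
qed

end

theorem lemma4:
  fixes p :: int
    and Fv :: "vertex \<Rightarrow> 'a::ab_group_add set" and Fe :: "edge \<Rightarrow> 'a set"
    and r :: "edge \<Rightarrow> vertex \<Rightarrow> 'a \<Rightarrow> 'a"
    and Av :: "(nat \<Rightarrow> int) \<Rightarrow> vertex \<Rightarrow> 'a \<Rightarrow> 'a"
    and Ae :: "(nat \<Rightarrow> int) \<Rightarrow> edge \<Rightarrow> 'a \<Rightarrow> 'a"
  assumes "prime p"
    and "coeff_sys p Fv Fe r Av Ae"
    and "smooth_sys p Fv Fe Av Ae"
    and "\<forall>\<tau> \<in> edges p. \<forall>x \<in> \<tau>. inj_on (r \<tau> x) (Fe \<tau>)"
    and "\<forall>x \<in> verts p. inj_on
           (H1_map p (stab p x) (Fv x) (\<lambda>g. Av g x) (sum_map p r x))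
           (H1 p (stab p x) (dsum_Theta p Fe x) (dsum_act p Ae x))"
  shows "H0_class p Fv Fe r ` C0_inv p Fv Av = H0_inv p Fv Fe r Av"
proof -
  interpret CS p Fv Fe r Av Ae using assms(1-4) by unfold_locales
  show ?thesis by (rule final[OF assms(5)])
qed


end
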